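(* Let $\mathcal{E}$ be a unital qubit channel with Stokes matrix $R$. Let $O_B^*\in SO(3)$ be a rotation matrix whose first row is a scalar multiple of $(R_{zz},R_{xz},R_{yz})$ (the other two rows arbitrary as long as $O_B^*$ is a rotation matrix), let $\mathcal{U}_B^*$ be the corresponding unitary channel and $\mathcal{E}^*=\mathcal{U}_B^*\circ\mathcal{E}$. Then $$F_1(\mathcal{E})=H_{\mathcal{E}^*}(X|E)-H_{\mathcal{E}^*}(X|Y)=F_2(\mathcal{E}),$$ where $F_1(\mathcal{E})=\max_{\mathcal{U}_B}[H_{\mathcal{U}_B\circ\mathcal{E}}(X|E)-H_{\mathcal{U}_B\circ\mathcal{E}}(X|Y)]$ and $F_2(\mathcal{E})=\max_{\mathcal{U}_A,\mathcal{U}_B}[H_{\mathcal{U}_B\circ\mathcal{E}\circ\mathcal{U}_A}(X|E)-H_{\mathcal{U}_B\circ\mathcal{E}\circ\mathcal{U}_A}(X|Y)]$, maxima over unitary qubit channels.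
   Context: A qubit channel $\mathcal{E}$ is described by its Stokes parameterization $(R,t)$: in Bloch coordinates $(\theta_z,\theta_x,\theta_y)$, $\theta_a=\mathrm{Tr}(\rho\sigma_a)$, it acts as $\theta\mapsto R\theta+t$ ($R$ real $3\times3$, indices ordered $z,x,y$). Unital means $t=0$. A unitary channel acts on Bloch vectors as a rotation $O\in SO(3)$ (every rotation arises); thus $\mathcal{U}_B\circ\mathcal{E}\circ\mathcal{U}_A$ has Stokes matrix $O_BRO_A$. $\mathcal{E}_E$ is the complementary channel to the environment. With $|0_z\rangle,|1_z\rangle$ the $\pm1$ eigenvectors of $\sigma_z$: $H_{\mathcal{E}}(X|E)=H(\rho_{XE})-H(\rho_E)$ (von Neumann entropy, base 2) for $\rho_{XE}=\sum_{x}\frac12|x_z\rangle\langle x_z|\otimes\mathcal{E}_E(|x_z\rangle\langle x_z|)$, and $H_{\mathcal{E}}(X|Y)$ is the conditional Shannon entropy for $P_{XY}(x,y)=\frac12\langle y_z|\mathcal{E}(|x_z\rangle\langle x_z|)|y_z\rangle$. *)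

theory Defs
  imports "Jordan_Normal_Form.Jordan_Normal_Form" "Jordan_Normal_Form.Schur_Decomposition"
begin

definition msum2 :: "(complex mat \<Rightarrow> complex mat) \<Rightarrow> complex mat list \<Rightarrow> complex mat" where
  "msum2 f Ks = foldr (\<lambda>K acc. f K + acc) Ks (0\<^sub>m 2 2)"

definition mtrace :: "complex mat \<Rightarrow> complex" where
  "mtrace A = (\<Sum>i<dim_row A. A $$ (i, i))"

definition qubit_channel :: "complex mat list \<Rightarrow> bool" where
  "qubit_channel Ks \<longleftrightarrow> (\<forall>K\<in>set Ks. K \<in> carrier_mat 2 2) \<and>
     msum2 (\<lambda>K. mat_adjoint K * K) Ks = 1\<^sub>m 2"

definition apply_channel :: "complex mat list \<Rightarrow> complex mat \<Rightarrow> complex mat" where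
  "apply_channel Ks \<rho> = msum2 (\<lambda>K. K * \<rho> * mat_adjoint K) Ks"

text \<open>Complementary channel to the environment (Stinespring V = sum_i K_i (x) |i>):
  (E_E rho)_{ij} = Tr(K_i rho K_j^H).\<close>

definition compl_channel :: "complex mat list \<Rightarrow> complex mat \<Rightarrow> complex mat" where
  "compl_channel Ks \<rho> = mat (length Ks) (length Ks)
     (\<lambda>(i,j). mtrace (Ks ! i * \<rho> * mat_adjoint (Ks ! j)))"

definition unitary2 :: "complex mat \<Rightarrow> bool" where
  "unitary2 U \<longleftrightarrow> U \<in> carrier_mat 2 2 \<and> U * mat_adjoint U = 1\<^sub>m 2"

definition compose_unitaries :: "complex mat \<Rightarrow> complex mat list \<Rightarrow> complex mat \<Rightarrow> complex mat list" where
  "compose_unitaries UB Ks UA = map (\<lambda>K. UB * K * UA) Ks"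

definition post_unitary :: "complex mat \<Rightarrow> complex mat list \<Rightarrow> complex mat list" where
  "post_unitary UB Ks = map (\<lambda>K. UB * K) Ks"

section \<open>Pauli matrices, Stokes parameterization (ordering z, x, y)\<close>

definition pauli :: "nat \<Rightarrow> complex mat" where
  "pauli a = (if a = 0 then mat_of_rows_list 2 [[1, 0], [0, -1]]
              else if a = 1 then mat_of_rows_list 2 [[0, 1], [1, 0]]
              else mat_of_rows_list 2 [[0, -\<i>], [\<i>, 0]])"

text \<open>theta_a = Tr(rho sigma_a); the channel acts as theta -> R theta + t, so
  R_ab = Tr(sigma_a E(sigma_b))/2 and t_a = Tr(sigma_a E(I))/2.\<close>

definition stokes_R :: "complex mat list \<Rightarrow> real mat" where
  "stokes_R Ks = mat 3 3 (\<lambda>(a,b). Re (mtrace (pauli a * apply_channel Ks (pauli b))) / 2)"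

definition stokes_t :: "complex mat list \<Rightarrow> real vec" where
  "stokes_t Ks = vec 3 (\<lambda>a. Re (mtrace (pauli a * apply_channel Ks (1\<^sub>m 2))) / 2)"

definition unital :: "complex mat list \<Rightarrow> bool" where
  "unital Ks \<longleftrightarrow> stokes_t Ks = 0\<^sub>v 3"

definition rotation3 :: "real mat \<Rightarrow> bool" where
  "rotation3 Q \<longleftrightarrow> Q \<in> carrier_mat 3 3 \<and> Q * transpose_mat Q = 1\<^sub>m 3 \<and> det Q = 1"

definition eta :: "real \<Rightarrow> real" where
  "eta p = (if p \<le> 0 then 0 else - p * log 2 p)"

definition vn_entropy :: "complex mat \<Rightarrow> real" where
  "vn_entropy \<rho> = (\<Sum>z\<in>{z. eigenvalue \<rho> z}. real (Polynomial.order z (char_poly \<rho>)) * eta (Re z))"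

definition ket_proj :: "nat \<Rightarrow> complex mat" where
  "ket_proj x = mat 2 2 (\<lambda>(i,j). if i = x \<and> j = x then 1 else 0)"

definition rho_XE :: "complex mat list \<Rightarrow> complex mat" where
  "rho_XE Ks = four_block_mat ((1/2) \<cdot>\<^sub>m compl_channel Ks (ket_proj 0))
      (0\<^sub>m (length Ks) (length Ks)) (0\<^sub>m (length Ks) (length Ks))
      ((1/2) \<cdot>\<^sub>m compl_channel Ks (ket_proj 1))"

definition rho_E :: "complex mat list \<Rightarrow> complex mat" where
  "rho_E Ks = (1/2) \<cdot>\<^sub>m compl_channel Ks (ket_proj 0) + (1/2) \<cdot>\<^sub>m compl_channel Ks (ket_proj 1)"

definition H_XE :: "complex mat list \<Rightarrow> real" where
  "H_XE Ks = vn_entropy (rho_XE Ks) - vn_entropy (rho_E Ks)"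

definition P_XY :: "complex mat list \<Rightarrow> nat \<Rightarrow> nat \<Rightarrow> real" where
  "P_XY Ks x y = Re (apply_channel Ks (ket_proj x) $$ (y, y)) / 2"

definition H_XY :: "complex mat list \<Rightarrow> real" where
  "H_XY Ks = (\<Sum>x<2. \<Sum>y<2. let p = P_XY Ks x y; q = (\<Sum>x'<2. P_XY Ks x' y) in
               if p \<le> 0 then 0 else - p * log 2 (p / q))"

definition key_rate :: "complex mat list \<Rightarrow> real" where
  "key_rate Ks = H_XE Ks - H_XY Ks"

definition F1 :: "complex mat list \<Rightarrow> real" where
  "F1 Ks = (SUP UB \<in> {U. unitary2 U}. key_rate (post_unitary UB Ks))"

definition F2 :: "complex mat list \<Rightarrow> real" where
  "F2 Ks = (SUP p \<in> {(UA, UB). unitary2 UA \<and> unitary2 UB}.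
              key_rate (compose_unitaries (snd p) Ks (fst p)))"

end

theory Submission
  imports Defs
begin

lemma mult22: assumes "A \<in> carrier_mat 2 2" "B \<in> carrier_mat 2 2" "i < 2" "j < 2"
  shows "(A * B) $$ (i,j) = A $$ (i,0) * B $$ (0,j) + A $$ (i,1) * B $$ (1,j)"
  using assms by (simp add: scalar_prod_def numeral_2_eq_2 row_def col_def)

lemma adj22: assumes "A \<in> carrier_mat 2 2" "i < 2" "j < 2"
  shows "mat_adjoint A $$ (i,j) = cnj (A $$ (j,i))"
  using assms by (simp add: mat_adjoint_def mat_of_rows_def col_def)

lemma adj_carrier[simp]: "A \<in> carrier_mat n m \<Longrightarrow> mat_adjoint A \<in> carrier_mat m n"
  by (simp add: mat_adjoint_def mat_of_rows_def)

lemma mtrace2: "A \<in> carrier_mat 2 2 \<Longrightarrow> mtrace A = A $$ (0,0) + A $$ (1,1)"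
  by (simp add: mtrace_def numeral_2_eq_2)

lemma const_poly_sum: "(\<Sum>k\<in>K. [:f k:] * [:g k:]) = [:(\<Sum>k\<in>K. f k * g k):]"
proof (induct K rule: infinite_finite_induct)
  case (insert x F) then show ?case by (simp add: ac_simps)
qed auto

lemma const_poly_sum1: "(\<Sum>k\<in>K. [:f k:]) = [:sum f K:]"
proof (induct K rule: infinite_finite_induct)
  case (insert x F) then show ?case by (simp add: ac_simps)
qed auto

lemma sylvester_cp:
  fixes Z :: "'a :: idom mat" and W :: "'a mat"
  assumes Z: "Z \<in> carrier_mat n m" and W: "W \<in> carrier_mat m n"
  shows "[:0,1:]^n * char_poly (W * Z) = [:0,1:]^m * char_poly (Z * W)"
proof -
  define X :: "'a poly" where "X = [:0,1:]"
  define Zp where "Zp = map_mat (\<lambda>a. [:a:]) Z"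
  define Wp where "Wp = map_mat (\<lambda>a. [:a:]) W"
  have Zp: "Zp \<in> carrier_mat n m" and Wp: "Wp \<in> carrier_mat m n" using Z W by (auto simp: Zp_def Wp_def)
  have cpWZ: "char_poly (W * Z) = det (X \<cdot>\<^sub>m 1\<^sub>m m - Wp * Zp)"
    unfolding char_poly_def char_poly_matrix_def X_def
    apply (rule arg_cong[of _ _ det])
    apply (rule eq_matI)
    using Z W by (auto simp: Wp_def Zp_def scalar_prod_def const_poly_sum1 ac_simps)
  have cpZW: "char_poly (Z * W) = det (X \<cdot>\<^sub>m 1\<^sub>m n - Zp * Wp)"
    unfolding char_poly_def char_poly_matrix_def X_def
    apply (rule arg_cong[of _ _ det])
    apply (rule eq_matI)
    using Z W by (auto simp: Wp_def Zp_def scalar_prod_def const_poly_sum1 ac_simps)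
  define A where "A = four_block_mat (X \<cdot>\<^sub>m 1\<^sub>m m) Wp Zp (1\<^sub>m n)"
  define L1 where "L1 = four_block_mat (1\<^sub>m m) (- Wp) (0\<^sub>m n m) (1\<^sub>m n)"
  define L2 where "L2 = four_block_mat (1\<^sub>m m) (0\<^sub>m m n) (- Zp) (X \<cdot>\<^sub>m 1\<^sub>m n)"
  have A: "A \<in> carrier_mat (m+n) (m+n)" using Zp Wp by (auto simp: A_def)
  have L1: "L1 \<in> carrier_mat (m+n) (m+n)" using Zp Wp by (auto simp: L1_def)
  have L2: "L2 \<in> carrier_mat (m+n) (m+n)" using Zp Wp by (auto simp: L2_def)
  have "L1 * A = four_block_mat (X \<cdot>\<^sub>m 1\<^sub>m m - Wp * Zp) (0\<^sub>m m n) Zp (1\<^sub>m n)"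
    unfolding L1_def A_def
    apply (subst mult_four_block_mat[OF one_carrier_mat uminus_carrier_mat[OF Wp] zero_carrier_mat one_carrier_mat
       smult_carrier_mat[OF one_carrier_mat] Wp Zp one_carrier_mat])
    using Zp Wp by (auto simp: minus_add_uminus_mat)
  hence dL1A: "det (L1 * A) = det (X \<cdot>\<^sub>m 1\<^sub>m m - Wp * Zp)"
    apply simp
    apply (subst det_four_block_mat_upper_right_zero[OF _ refl Zp one_carrier_mat])
    using Zp Wp by auto
  have dL1: "det L1 = 1" unfolding L1_def
    using Wp by (subst det_four_block_mat_lower_left_zero[OF _ uminus_carrier_mat[OF Wp] refl], auto)
  have "L2 * A = four_block_mat (X \<cdot>\<^sub>m 1\<^sub>m m) Wp (0\<^sub>m n m) (X \<cdot>\<^sub>m 1\<^sub>m n - Zp * Wp)"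
    unfolding L2_def A_def
    apply (subst mult_four_block_mat[OF one_carrier_mat zero_carrier_mat uminus_carrier_mat[OF Zp] smult_carrier_mat[OF one_carrier_mat]
       smult_carrier_mat[OF one_carrier_mat] Wp Zp one_carrier_mat])
    using Zp Wp apply (auto)
    done
  hence dL2A: "det (L2 * A) = X ^ m * det (X \<cdot>\<^sub>m 1\<^sub>m n - Zp * Wp)"
    apply simp
    apply (subst det_four_block_mat_lower_left_zero[OF _ Wp refl])
    using Zp Wp by auto
  have dL2: "det L2 = X ^ n" unfolding L2_def
    using Zp by (subst det_four_block_mat_upper_right_zero[OF _ refl uminus_carrier_mat[OF Zp]], auto)
  have "det (L1 * A) = det A" using det_mult[OF L1 A] dL1 by simp
  moreover have "det (L2 * A) = X ^ n * det A" using det_mult[OF L2 A] dL2 by simp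
  ultimately show ?thesis using dL1A dL2A cpWZ cpZW X_def by simp
qed

definition Spol :: "(complex \<Rightarrow> real) \<Rightarrow> complex poly \<Rightarrow> real" where
  "Spol f p = (\<Sum>z\<in>{z. poly p z = 0}. real (Polynomial.order z p) * f z)"

lemma Spol_alt: assumes "p \<noteq> 0" "finite A" "{z. poly p z = 0} \<subseteq> A"
  shows "Spol f p = (\<Sum>z\<in>A. real (Polynomial.order z p) * f z)"
  unfolding Spol_def
  by (rule sum.mono_neutral_left, insert assms, auto simp: order_0I)

lemma Spol_mult: assumes p: "p \<noteq> 0" and q: "q \<noteq> 0"
  shows "Spol f (p * q) = Spol f p + Spol f q"
proof -
  let ?A = "{z. poly p z = 0} \<union> {z. poly q z = 0}"
  have fin: "finite ?A" using poly_roots_finite p q by auto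
  have pq: "p * q \<noteq> 0" using p q by auto
  have "Spol f (p*q) = (\<Sum>z\<in>?A. real (Polynomial.order z (p*q)) * f z)"
    by (rule Spol_alt[OF pq fin], auto)
  also have "\<dots> = (\<Sum>z\<in>?A. real (Polynomial.order z p) * f z + real (Polynomial.order z q) * f z)"
    using order_mult[OF pq] by (intro sum.cong, auto simp: algebra_simps)
  also have "\<dots> = Spol f p + Spol f q"
    by (simp add: sum.distrib Spol_alt[OF p fin] Spol_alt[OF q fin])
  finally show ?thesis .
qed

lemma Spol_X: assumes "f 0 = 0" shows "Spol f ([:0,1:]^k) = 0"
  unfolding Spol_def using assms by (intro sum.neutral, auto)

lemma Spol_lin: "Spol f [:-a,1:] = f a"
proof -
  have "{z. poly [:-a,1:] z = 0} = {a}" by auto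
  thus ?thesis unfolding Spol_def using Polynomial.order_power_n_n[of a 1] by simp
qed

lemma vn_Spol: assumes "A \<in> carrier_mat n n"
  shows "vn_entropy A = Spol (\<lambda>z. eta (Re z)) (char_poly A)"
proof -
  have e: "Collect (eigenvalue A) = {z. poly (char_poly A) z = 0}"
    using eigenvalue_root_char_poly[OF assms] by auto
  show ?thesis unfolding vn_entropy_def Spol_def e ..
qed

lemma char_poly_nz: "A \<in> carrier_mat n n \<Longrightarrow> char_poly A \<noteq> (0 :: 'a :: {idom} poly)"
  using degree_monic_char_poly[of A n] by auto

lemma char_poly_block_diag:
  fixes A :: "'a :: idom mat"
  assumes A: "A \<in> carrier_mat n n" and B: "B \<in> carrier_mat m m"
  shows "char_poly (four_block_mat A (0\<^sub>m n m) (0\<^sub>m m n) B) = char_poly A * char_poly B"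
proof -
  have "char_poly_matrix (four_block_mat A (0\<^sub>m n m) (0\<^sub>m m n) B) =
     four_block_mat (char_poly_matrix A) (0\<^sub>m n m) (0\<^sub>m m n) (char_poly_matrix B)"
    by (rule eq_matI, insert A B, auto simp: char_poly_matrix_def)
  thus ?thesis unfolding char_poly_def
    by (simp, subst det_four_block_mat_upper_right_zero[OF _ refl], insert A B, auto)
qed

lemma det22: assumes A: "(A :: 'a :: idom mat) \<in> carrier_mat 2 2"
  shows "det A = A $$ (0,0) * A $$ (1,1) - A $$ (0,1) * A $$ (1,0)"
proof -
  let ?s = "\<lambda>x. mat 1 1 (\<lambda>_. x) :: 'a mat"
  have eq: "A = four_block_mat (?s (A $$ (0,0))) (?s (A $$ (0,1))) (?s (A $$ (1,0))) (?s (A $$ (1,1)))"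
    by (rule eq_matI, insert A, auto simp: four_block_mat_def less_Suc_eq numeral_2_eq_2)
  have "det A = det (?s (A $$ (0,0)) * ?s (A $$ (1,1)) - ?s (A $$ (0,1)) * ?s (A $$ (1,0)))"
    apply (subst eq, rule det_four_block_mat)
    by (auto intro!: eq_matI simp: scalar_prod_def ac_simps)
  also have "\<dots> = A $$ (0,0) * A $$ (1,1) - A $$ (0,1) * A $$ (1,0)"
    by (subst det_single, auto simp: scalar_prod_def)
  finally show ?thesis .
qed

lemma char_poly22: assumes A: "(A :: 'a :: idom mat) \<in> carrier_mat 2 2"
  shows "char_poly A = [: A $$ (0,0) * A $$ (1,1) - A $$ (0,1) * A $$ (1,0), - (A $$ (0,0) + A $$ (1,1)), 1 :]"
  unfolding char_poly_def
  apply (subst det22)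
  using A by (auto simp: char_poly_matrix_def algebra_simps)

lemma msum2_carrier: "(\<forall>K\<in>set Ks. f K \<in> carrier_mat 2 2) \<Longrightarrow> msum2 f Ks \<in> carrier_mat 2 2"
  by (induct Ks, auto simp: msum2_def)

lemma msum2_idx: assumes "\<forall>K\<in>set Ks. f K \<in> carrier_mat 2 2" "i < 2" "j < 2"
  shows "msum2 f Ks $$ (i,j) = (\<Sum>k<length Ks. f (Ks ! k) $$ (i,j))"
  using assms
proof (induct Ks)
  case Nil thus ?case by (simp add: msum2_def)
next
  case (Cons K Ks)
  have c: "msum2 f Ks \<in> carrier_mat 2 2" using Cons msum2_carrier by auto
  have "msum2 f (K # Ks) = f K + msum2 f Ks" by (simp add: msum2_def)
  hence "msum2 f (K # Ks) $$ (i,j) = f K $$ (i,j) + msum2 f Ks $$ (i,j)"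
    using c Cons by simp
  moreover have "msum2 f Ks $$ (i, j) = (\<Sum>k<length Ks. f (Ks ! k) $$ (i, j))" using Cons by simp
  ultimately show ?case by (simp only: length_Cons sum.lessThan_Suc_shift nth_Cons_0 nth_Cons_Suc)
qed

lemma adj_dim[simp]: "dim_row (mat_adjoint A) = dim_col A" "dim_col (mat_adjoint A) = dim_row A"
  by (auto simp: mat_adjoint_def mat_of_rows_def)

lemma adj_index[simp]: "i < dim_col A \<Longrightarrow> j < dim_row A \<Longrightarrow> mat_adjoint A $$ (i,j) = cnj (A $$ (j,i))"
  by (simp add: mat_adjoint_def mat_of_rows_def col_def)

lemma sp2: "dim_vec w = 2 \<Longrightarrow> v \<bullet> w = v $ 0 * w $ 0 + v $ 1 * w $ 1"
  unfolding scalar_prod_def by (simp add: numeral_2_eq_2)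

lemma ket_proj_carrier[simp]: "ket_proj x \<in> carrier_mat 2 2"
  by (simp add: ket_proj_def)

lemma sandwich22g: assumes K: "K \<in> carrier_mat 2 2" and r: "\<rho> \<in> carrier_mat 2 2" and L: "L \<in> carrier_mat 2 2" and "s < 2" "t < 2"
  shows "(K * \<rho> * mat_adjoint L) $$ (s,t) =
    (K $$ (s,0) * \<rho> $$ (0,0) + K $$ (s,1) * \<rho> $$ (1,0)) * cnj (L $$ (t,0)) +
    (K $$ (s,0) * \<rho> $$ (0,1) + K $$ (s,1) * \<rho> $$ (1,1)) * cnj (L $$ (t,1))"
proof -
  have KR: "K * \<rho> \<in> carrier_mat 2 2" using K r by auto
  have Ka: "mat_adjoint L \<in> carrier_mat 2 2" using L by auto
  show ?thesis
    apply (subst mult22[OF KR Ka assms(4,5)])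
    apply (subst mult22[OF K r assms(4)], simp)
    apply (subst mult22[OF K r assms(4)], simp)
    apply (subst adj22[OF L], simp, rule assms(5))
    apply (subst adj22[OF L], simp, rule assms(5))
    by simp
qed

lemma sandwich22: assumes K: "K \<in> carrier_mat 2 2" and r: "\<rho> \<in> carrier_mat 2 2" and "s < 2" "t < 2"
  shows "(K * \<rho> * mat_adjoint K) $$ (s,t) =
    (K $$ (s,0) * \<rho> $$ (0,0) + K $$ (s,1) * \<rho> $$ (1,0)) * cnj (K $$ (t,0)) +
    (K $$ (s,0) * \<rho> $$ (0,1) + K $$ (s,1) * \<rho> $$ (1,1)) * cnj (K $$ (t,1))"
  by (rule sandwich22g[OF K r K assms(3,4)])

lemma less2: "(x::nat) < 2 \<Longrightarrow> x = 0 \<or> x = 1" by auto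

lemma qc_carrier: "qubit_channel Ks \<Longrightarrow> i < length Ks \<Longrightarrow> Ks ! i \<in> carrier_mat 2 2"
  unfolding qubit_channel_def by auto

lemma qc_carrier_all: "qubit_channel Ks \<Longrightarrow> \<forall>K\<in>set Ks. K \<in> carrier_mat 2 2"
  unfolding qubit_channel_def by auto

lemma apply_idx: assumes cK: "\<forall>K\<in>set Ks. K \<in> carrier_mat 2 2" and r: "\<rho> \<in> carrier_mat 2 2" and st: "s < 2" "t < 2"
  shows "apply_channel Ks \<rho> $$ (s,t) = (\<Sum>i<length Ks.
    (Ks!i $$ (s,0) * \<rho> $$ (0,0) + Ks!i $$ (s,1) * \<rho> $$ (1,0)) * cnj (Ks!i $$ (t,0)) +
    (Ks!i $$ (s,0) * \<rho> $$ (0,1) + Ks!i $$ (s,1) * \<rho> $$ (1,1)) * cnj (Ks!i $$ (t,1)))"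
proof -
  have c: "\<forall>K\<in>set Ks. K * \<rho> * mat_adjoint K \<in> carrier_mat 2 2" using cK r by (blast intro: mult_carrier_mat adj_carrier)
  show ?thesis unfolding apply_channel_def
    apply (subst msum2_idx[OF c st])
    apply (rule sum.cong[OF refl])
    apply (rule sandwich22[OF _ r st])
    using cK by auto
qed

lemma apply_proj: assumes "\<forall>K\<in>set Ks. K \<in> carrier_mat 2 2" "x < 2" "s < 2" "t < 2"
  shows "apply_channel Ks (ket_proj x) $$ (s,t) = (\<Sum>i<length Ks. Ks!i $$ (s,x) * cnj (Ks!i $$ (t,x)))"
  apply (subst apply_idx[OF assms(1) ket_proj_carrier assms(3,4)])
  apply (rule sum.cong[OF refl])
  using less2[OF assms(2)] by (elim disjE, simp_all add: ket_proj_def)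

lemma apply_one: assumes "\<forall>K\<in>set Ks. K \<in> carrier_mat 2 2" "s < 2" "t < 2"
  shows "apply_channel Ks (1\<^sub>m 2) $$ (s,t) = (\<Sum>i<length Ks. Ks!i $$ (s,0) * cnj (Ks!i $$ (t,0)) + Ks!i $$ (s,1) * cnj (Ks!i $$ (t,1)))"
  apply (subst apply_idx[OF assms(1) one_carrier_mat assms(2,3)])
  by simp

lemma tp_idx: assumes qc: "qubit_channel Ks" and cc: "c < 2" "c' < 2"
  shows "(\<Sum>i<length Ks. cnj (Ks!i $$ (0,c)) * Ks!i $$ (0,c') + cnj (Ks!i $$ (1,c)) * Ks!i $$ (1,c')) = (if c = c' then 1 else 0)"
proof -
  have cK: "\<forall>K\<in>set Ks. K \<in> carrier_mat 2 2" using qc_carrier_all[OF qc] .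
  have c: "\<forall>K\<in>set Ks. mat_adjoint K * K \<in> carrier_mat 2 2" using cK by (blast intro: mult_carrier_mat adj_carrier)
  have m1: "msum2 (\<lambda>K. mat_adjoint K * K) Ks = 1\<^sub>m 2" using qc unfolding qubit_channel_def by blast
  have e1: "msum2 (\<lambda>K. mat_adjoint K * K) Ks $$ (c,c') = (if c = c' then 1 else 0)"
    unfolding m1 using cc by simp
  have e2: "msum2 (\<lambda>K. mat_adjoint K * K) Ks $$ (c,c') = (\<Sum>i<length Ks. cnj (Ks!i $$ (0,c)) * Ks!i $$ (0,c') + cnj (Ks!i $$ (1,c)) * Ks!i $$ (1,c'))"
    apply (subst msum2_idx[OF c cc])
    apply (rule sum.cong[OF refl])
    subgoal premises p for i
    proof -
      have Ki: "Ks!i \<in> carrier_mat 2 2" using qc_carrier[OF qc] p by auto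
      show ?thesis by (simp add: mult22[OF adj_carrier[OF Ki] Ki cc] adj22[OF Ki] cc)
    qed
    done
  show ?thesis using trans[OF sym[OF e2] e1] .
qed

lemma compl_entry: assumes Ki: "Ki \<in> carrier_mat 2 2" and Kj: "Kj \<in> carrier_mat 2 2" and x: "x < 2"
  shows "mtrace (Ki * ket_proj x * mat_adjoint Kj) = Ki $$ (0,x) * cnj (Kj $$ (0,x)) + Ki $$ (1,x) * cnj (Kj $$ (1,x))"
proof -
  have c: "Ki * ket_proj x * mat_adjoint Kj \<in> carrier_mat 2 2" using Ki Kj by auto
  have "mtrace (Ki * ket_proj x * mat_adjoint Kj) = (Ki * ket_proj x * mat_adjoint Kj) $$ (0,0) + (Ki * ket_proj x * mat_adjoint Kj) $$ (1,1)"
    using c by (rule mtrace2)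
  also have "\<dots> = Ki $$ (0,x) * cnj (Kj $$ (0,x)) + Ki $$ (1,x) * cnj (Kj $$ (1,x))"
    apply (subst sandwich22g[OF Ki ket_proj_carrier Kj], simp, simp)+
    using less2[OF x] by (elim disjE, simp_all add: ket_proj_def)
  finally show ?thesis .
qed

lemma compl_proj: assumes cK: "\<forall>K\<in>set Ks. K \<in> carrier_mat 2 2" and x: "x < 2"
  shows "compl_channel Ks (ket_proj x) = mat (length Ks) (length Ks)
     (\<lambda>(i,j). Ks!i $$ (0,x) * cnj (Ks!j $$ (0,x)) + Ks!i $$ (1,x) * cnj (Ks!j $$ (1,x)))"
  unfolding compl_channel_def
  by (rule eq_matI, insert cK x, auto simp: compl_entry)

definition hb :: "real \<Rightarrow> real" where "hb x = eta x + eta (1 - x)"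

lemma eta_nonneg: "0 \<le> x \<Longrightarrow> x \<le> 1 \<Longrightarrow> 0 \<le> eta x"
  unfolding eta_def by (auto simp: mult_nonneg_nonpos)

lemma eta_half: assumes "0 \<le> x" shows "eta (x / 2) = x / 2 + eta x / 2"
proof (cases "x = 0")
  case True thus ?thesis by (simp add: eta_def)
next
  case False
  hence x: "x > 0" using assms by auto
  have h: "log 2 (x/2) = log 2 x - 1" using x by (simp add: log_divide)
  have "- (x/2) * log 2 (x/2) = x/2 + (- x * log 2 x)/2" unfolding h by (simp add: algebra_simps)
  thus ?thesis using x unfolding eta_def by simp
qed

lemma hb_sym: "hb (1 - x) = hb x" unfolding hb_def by simp

lemma hb_dec_aux: assumes "1/2 \<le> x" "x \<le> y" "y < 1"
  shows "hb y \<le> hb x"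
proof -
  define g where "g t = - t * log 2 t - (1 - t) * log 2 (1 - t)" for t :: real
  have g: "\<And>t. 0 < t \<Longrightarrow> t < 1 \<Longrightarrow> hb t = g t" unfolding hb_def eta_def g_def by (auto simp: algebra_simps)
  have "g y \<le> g x"
  proof (rule DERIV_nonpos_imp_nonincreasing[OF assms(2)])
    fix t assume t: "x \<le> t" "t \<le> y"
    hence t0: "0 < t" "t < 1" using assms by auto
    have "DERIV g t :> (- (log 2 t + t * (1 / (t * ln 2))) - (- log 2 (1 - t) + (1 - t) * (- 1 / ((1 - t) * ln 2))))"
      unfolding g_def using t0
      by (auto intro!: derivative_eq_intros)
    moreover have "(- (log 2 t + t * (1 / (t * ln 2))) - (- log 2 (1 - t) + (1 - t) * (- 1 / ((1 - t) * ln 2)))) = log 2 (1 - t) - log 2 t"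
      using t0 by (simp add: field_simps)
    moreover have "log 2 (1 - t) \<le> log 2 t" using t0 t assms by simp
    ultimately show "\<exists>d. DERIV g t :> d \<and> d \<le> 0" by auto
  qed
  thus ?thesis using g assms by simp
qed

lemma hb_nonneg: "0 \<le> x \<Longrightarrow> x \<le> 1 \<Longrightarrow> 0 \<le> hb x"
  unfolding hb_def using eta_nonneg[of x] eta_nonneg[of "1-x"] by simp

lemma hb_dec: assumes "1/2 \<le> x" "x \<le> y" "y \<le> 1"
  shows "hb y \<le> hb x"
proof (cases "y = 1")
  case True
  have "hb 1 = 0" unfolding hb_def eta_def by simp
  thus ?thesis using True hb_nonneg[of x] assms by simp
next
  case False thus ?thesis using hb_dec_aux[of x y] assms by simp
qed

lemma entropy_ineq:
  fixes a d :: real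
  assumes a: "0 \<le> a" "a \<le> 1" and d: "0 \<le> d" "d \<le> a * (1 - a)"
  shows "2 * (eta ((1 + sqrt (1 - 4*d)) / 4) + eta ((1 - sqrt (1 - 4*d)) / 4)) - hb a \<le> 1"
    and "d = a * (1 - a) \<Longrightarrow> 2 * (eta ((1 + sqrt (1 - 4*d)) / 4) + eta ((1 - sqrt (1 - 4*d)) / 4)) - hb a = 1"
proof -
  have q: "a*(1-a) \<le> 1/4"
  proof -
    have "0 \<le> (2*a - 1)^2" by simp
    thus ?thesis by (simp add: power2_eq_square algebra_simps)
  qed
  define s where "s = sqrt (1 - 4*d)"
  have s0: "0 \<le> s" and s1: "s \<le> 1" using d q unfolding s_def by auto
  have ss: "s^2 = 1 - 4*d" unfolding s_def using d q by (subst real_sqrt_pow2, linarith, simp)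
  define l where "l = (1 + s) / 2"
  have e1: "eta ((1 + s) / 4) = l / 2 + eta l / 2" using eta_half[of l] s0 unfolding l_def by (simp add: field_simps)
  have e2: "eta ((1 - s) / 4) = (1 - l) / 2 + eta (1 - l) / 2" using eta_half[of "1 - l"] s1 unfolding l_def by (simp add: field_simps)
  have L: "2 * (eta ((1 + s) / 4) + eta ((1 - s) / 4)) = 1 + hb l" unfolding e1 e2 hb_def by (simp add: field_simps)
  define a' where "a' = max a (1 - a)"
  have ha: "hb a = hb a'" unfolding a'_def max_def using hb_sym[of a] by auto
  have sa: "\<bar>1 - 2*a\<bar> \<le> s"
  proof -
    have "(1 - 2*a)^2 \<le> s^2" unfolding ss using d by (simp add: power2_eq_square algebra_simps)
    thus ?thesis using s0 power2_le_imp_le[of "\<bar>1 - 2*a\<bar>" s] by simp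
  qed
  have a'l: "a' \<le> l" using sa unfolding a'_def l_def by (auto simp: max_def abs_if split: if_splits)
  have a'h: "1/2 \<le> a'" unfolding a'_def by (auto simp: max_def)
  have l1: "l \<le> 1" using s1 unfolding l_def by auto
  show "2 * (eta ((1 + sqrt (1 - 4*d)) / 4) + eta ((1 - sqrt (1 - 4*d)) / 4)) - hb a \<le> 1"
    using L hb_dec[OF a'h a'l l1] ha unfolding s_def by simp
  assume eq: "d = a * (1 - a)"
  have "s^2 = (1 - 2*a)^2" unfolding ss eq by (simp add: power2_eq_square algebra_simps)
  hence "s = \<bar>1 - 2*a\<bar>" using s0 by (metis abs_of_nonneg power2_abs real_sqrt_abs real_sqrt_unique)
  hence "l = a'" unfolding l_def a'_def by (auto simp: max_def abs_if)
  thus "2 * (eta ((1 + sqrt (1 - 4*d)) / 4) + eta ((1 - sqrt (1 - 4*d)) / 4)) - hb a = 1"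
    using L ha unfolding s_def by simp
qed

lemma Spol_cp_half: assumes Z: "Z \<in> carrier_mat n 2" and W: "W \<in> carrier_mat 2 n"
  and cp: "char_poly (W * Z) = [:-m1,1:] * [:-m2,1:]"
  shows "Spol (\<lambda>z. eta (Re z)) (char_poly (Z * W)) = eta (Re m1) + eta (Re m2)"
proof -
  let ?f = "\<lambda>z. eta (Re z)"
  have f0: "?f 0 = 0" by (simp add: eta_def)
  have s: "[:0,1:]^n * char_poly (W * Z) = [:0,1:]^2 * char_poly (Z * W)"
    by (rule sylvester_cp[OF Z W])
  have nz1: "char_poly (W * Z) \<noteq> 0" by (rule char_poly_nz[of _ 2], insert Z W, auto)
  have nz2: "char_poly (Z * W) \<noteq> 0" by (rule char_poly_nz[of _ n], insert Z W, auto)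
  have X: "\<And>k. ([:0,1:] :: complex poly)^k \<noteq> 0" by simp
  have "Spol ?f (char_poly (Z * W)) = Spol ?f ([:0,1:]^2 * char_poly (Z * W))"
    by (simp add: Spol_mult[OF X nz2] Spol_X[of ?f, OF f0])
  also have "\<dots> = Spol ?f ([:0,1:]^n * char_poly (W * Z))" by (simp add: s)
  also have "\<dots> = Spol ?f (char_poly (W * Z))" by (simp add: Spol_mult[OF X nz1] Spol_X[of ?f, OF f0])
  also have "\<dots> = ?f m1 + ?f m2" unfolding cp by (subst Spol_mult, auto simp: Spol_lin)
  finally show ?thesis .
qed

lemma vn_block:
  assumes G0: "G0 \<in> carrier_mat n n" and G1: "G1 \<in> carrier_mat n n"
    and Z0: "Z0 \<in> carrier_mat n 2" and W0: "W0 \<in> carrier_mat 2 n"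
    and Z1: "Z1 \<in> carrier_mat n 2" and W1: "W1 \<in> carrier_mat 2 n"
    and e0: "(1/2) \<cdot>\<^sub>m G0 = Z0 * W0" and e1: "(1/2) \<cdot>\<^sub>m G1 = Z1 * W1"
    and c0: "char_poly (W0 * Z0) = [:-m1,1:] * [:-m2,1:]"
    and c1: "char_poly (W1 * Z1) = [:-m1,1:] * [:-m2,1:]"
  shows "vn_entropy (four_block_mat ((1/2) \<cdot>\<^sub>m G0) (0\<^sub>m n n) (0\<^sub>m n n) ((1/2) \<cdot>\<^sub>m G1)) = 2 * (eta (Re m1) + eta (Re m2))"
proof -
  let ?f = "\<lambda>z. eta (Re z)"
  have h0: "(1/2) \<cdot>\<^sub>m G0 \<in> carrier_mat n n" and h1: "(1/2) \<cdot>\<^sub>m G1 \<in> carrier_mat n n" using G0 G1 by auto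
  have "vn_entropy (four_block_mat ((1/2) \<cdot>\<^sub>m G0) (0\<^sub>m n n) (0\<^sub>m n n) ((1/2) \<cdot>\<^sub>m G1)) =
     Spol ?f (char_poly ((1/2) \<cdot>\<^sub>m G0) * char_poly ((1/2) \<cdot>\<^sub>m G1))"
    by (subst vn_Spol[of _ "n+n"], insert h0 h1, auto simp: char_poly_block_diag[OF h0 h1])
  also have "\<dots> = Spol ?f (char_poly ((1/2) \<cdot>\<^sub>m G0)) + Spol ?f (char_poly ((1/2) \<cdot>\<^sub>m G1))"
    by (rule Spol_mult, rule char_poly_nz[OF h0], rule char_poly_nz[OF h1])
  also have "\<dots> = 2 * (eta (Re m1) + eta (Re m2))"
    unfolding e0 e1 Spol_cp_half[OF Z0 W0 c0] Spol_cp_half[OF Z1 W1 c1] by simp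
  finally show ?thesis .
qed

lemma cs_aux:
  fixes x y :: "nat \<Rightarrow> complex"
  shows "(cmod (\<Sum>i<n. x i * cnj (y i)))^2 \<le> (\<Sum>i<n. (cmod (x i))^2) * (\<Sum>i<n. (cmod (y i))^2)"
proof -
  define A where "A = (\<Sum>i<n. (cmod (x i))^2)"
  define B where "B = (\<Sum>i<n. (cmod (y i))^2)"
  define C where "C = (\<Sum>i<n. x i * cnj (y i))"
  have B0: "0 \<le> B" unfolding B_def by (simp add: sum_nonneg)
  have A0: "0 \<le> A" unfolding A_def by (simp add: sum_nonneg)
  have ex: "\<And>i. (cmod (of_real B * x i - C * y i))^2 = B^2 * (cmod (x i))^2 - 2 * B * Re (cnj C * (x i * cnj (y i))) + (cmod C)^2 * (cmod (y i))^2"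
    unfolding cmod_power2 by (simp add: power2_eq_square algebra_simps)
  have reC: "(\<Sum>i<n. Re (cnj C * (x i * cnj (y i)))) = (cmod C)^2"
  proof -
    have "(\<Sum>i<n. Re (cnj C * (x i * cnj (y i)))) = Re (cnj C * C)"
      unfolding C_def by (simp add: sum_distrib_left)
    also have "\<dots> = (cmod C)^2" unfolding cmod_power2 by (simp add: power2_eq_square)
    finally show ?thesis .
  qed
  have "0 \<le> (\<Sum>i<n. (cmod (of_real B * x i - C * y i))^2)" by (simp add: sum_nonneg)
  also have "\<dots> = (\<Sum>i<n. B^2 * (cmod (x i))^2 - 2 * B * Re (cnj C * (x i * cnj (y i))) + (cmod C)^2 * (cmod (y i))^2)"
    by (simp only: ex)
  also have "\<dots> = B^2 * A - 2 * B * (cmod C)^2 + (cmod C)^2 * B"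
    by (simp only: sum.distrib sum_subtractf sum_distrib_left[symmetric] reC A_def[symmetric] B_def[symmetric])
  finally have main: "0 \<le> B * (B * A - (cmod C)^2)" by (simp add: power2_eq_square algebra_simps)
  show ?thesis
  proof (cases "B = 0")
    case True
    hence "\<forall>i\<in>{..<n}. (cmod (y i))^2 = 0" unfolding B_def by (subst (asm) sum_nonneg_eq_0_iff, auto)
    hence "C = 0" unfolding C_def by simp
    thus ?thesis unfolding C_def[symmetric] A_def[symmetric] B_def[symmetric] using A0 B0 by simp
  next
    case False
    hence "B > 0" using B0 by auto
    hence "0 \<le> B * A - (cmod C)^2" using main by (simp add: zero_le_mult_iff)
    thus ?thesis unfolding C_def[symmetric] A_def[symmetric] B_def[symmetric] by (simp add: algebra_simps)
  qed
qed

lemma term_half: "(if p/2 \<le> 0 then 0 else - (p/2) * log 2 ((p/2) / (1/2))) = eta p / 2"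
  unfolding eta_def by auto

lemma lin_mult: "[:-u,1:] * [:-v,1:] = [:u*v, -(u+v), 1::'a::comm_ring_1:]"
  by (simp add: algebra_simps)

lemma cp_form:
  fixes B :: "complex mat"
  assumes B: "B \<in> carrier_mat 2 2" and tr: "B $$ (0,0) + B $$ (1,1) = 1/2"
    and dt: "B $$ (0,0) * B $$ (1,1) - B $$ (0,1) * B $$ (1,0) = of_real (d / 4)"
    and d: "0 \<le> d" "d \<le> 1/4"
  shows "char_poly B = [:- of_real ((1 + sqrt (1 - 4*d))/4), 1:] * [:- of_real ((1 - sqrt (1 - 4*d))/4), 1:]"
proof -
  define s where "s = sqrt (1 - 4*d)"
  have ss: "s * s = 1 - 4 * d" unfolding s_def using d by simp
  have p: "of_real ((1 + s)/4) * of_real ((1 - s)/4) = (of_real (d/4) :: complex)"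
  proof -
    have "((1 + s)/4) * ((1 - s)/4) = d/4" using ss by (simp add: field_simps)
    thus ?thesis by (metis of_real_mult)
  qed
  have q: "of_real ((1 + s)/4) + of_real ((1 - s)/4) = (1/2 :: complex)"
  proof -
    have "((1 + s)/4) + ((1 - s)/4) = (1/2::real)" by (simp add: field_simps)
    thus ?thesis by (metis of_real_add of_real_divide of_real_1 of_real_numeral)
  qed
  have "char_poly B = [: of_real (d/4), - 1/2, 1:]"
    unfolding char_poly22[OF B] dt tr by simp
  also have "\<dots> = [:- of_real ((1 + s)/4), 1:] * [:- of_real ((1 - s)/4), 1:]"
    unfolding lin_mult p q by simp
  finally show ?thesis unfolding s_def .
qed

lemma sum_2: "(\<Sum>x<(2::nat). f x) = f 0 + f 1"
  by (simp add: numeral_2_eq_2)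

lemma kcnj: "z * cnj z = of_real ((cmod z)^2)"
  by (metis complex_norm_square)

lemma rate_formula:
  assumes qc: "qubit_channel Ks" and EI: "apply_channel Ks (1\<^sub>m 2) = 1\<^sub>m 2"
  defines "M \<equiv> apply_channel Ks (ket_proj 0)"
  defines "a \<equiv> Re (M $$ (0,0))"
  defines "d \<equiv> Re (M $$ (0,0)) * Re (M $$ (1,1)) - (cmod (M $$ (0,1)))^2"
  shows "key_rate Ks = 2 * (eta ((1 + sqrt (1 - 4*d))/4) + eta ((1 - sqrt (1 - 4*d))/4)) - vn_entropy (rho_E Ks) - hb a"
    and "0 \<le> a" "a \<le> 1" "0 \<le> d" "d \<le> a * (1 - a)"
proof -
  have cK: "\<forall>K\<in>set Ks. K \<in> carrier_mat 2 2" by (rule qc_carrier_all[OF qc])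
  define n where "n = length Ks"
  define k where "k i r c = Ks!i $$ (r,c)" for i r c
  define M1 where "M1 = apply_channel Ks (ket_proj 1)"
  have mx: "\<And>x s t. x < 2 \<Longrightarrow> s < 2 \<Longrightarrow> t < 2 \<Longrightarrow> apply_channel Ks (ket_proj x) $$ (s,t) = (\<Sum>i<n. k i s x * cnj (k i t x))"
    unfolding k_def n_def using apply_proj[OF cK] by simp
  have m: "\<And>s t. s < 2 \<Longrightarrow> t < 2 \<Longrightarrow> M $$ (s,t) = (\<Sum>i<n. k i s 0 * cnj (k i t 0))"
    unfolding M_def using mx by simp
  have m1: "\<And>s t. s < 2 \<Longrightarrow> t < 2 \<Longrightarrow> M1 $$ (s,t) = (\<Sum>i<n. k i s 1 * cnj (k i t 1))"
    unfolding M1_def using mx by simp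
  have M1s: "apply_channel Ks (ket_proj (Suc 0)) = M1" unfolding M1_def by simp
  have sumI: "\<And>s t. s < 2 \<Longrightarrow> t < 2 \<Longrightarrow> M $$ (s,t) + M1 $$ (s,t) = (if s = t then 1 else 0)"
  proof -
    fix s t :: nat assume st: "s < 2" "t < 2"
    have "apply_channel Ks (1\<^sub>m 2) $$ (s,t) = (\<Sum>i<n. k i s 0 * cnj (k i t 0) + k i s 1 * cnj (k i t 1))"
      unfolding k_def n_def by (rule apply_one[OF cK st])
    hence "(1\<^sub>m 2 :: complex mat) $$ (s,t) = (\<Sum>i<n. k i s 0 * cnj (k i t 0) + k i s 1 * cnj (k i t 1))"
      unfolding EI .
    thus "M $$ (s,t) + M1 $$ (s,t) = (if s = t then 1 else 0)"
      using st by (simp add: m m1 sum.distrib)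
  qed
  have tr: "M $$ (0,0) + M $$ (1,1) = 1"
  proof -
    have "(\<Sum>i<n. cnj (k i 0 0) * k i 0 0 + cnj (k i 1 0) * k i 1 0) = 1"
      using tp_idx[OF qc, of 0 0] unfolding k_def n_def by simp
    thus ?thesis by (simp add: m sum.distrib ac_simps)
  qed
  have m00: "M $$ (0,0) = of_real (\<Sum>i<n. (cmod (k i 0 0))^2)"
    by (simp add: m kcnj)
  have m11: "M $$ (1,1) = of_real (\<Sum>i<n. (cmod (k i 1 0))^2)"
    by (simp add: m kcnj)
  have a_eq: "a = (\<Sum>i<n. (cmod (k i 0 0))^2)" unfolding a_def m00 by simp
  have Rm11: "Re (M $$ (1,1)) = 1 - a" using arg_cong[OF tr, of Re] unfolding a_def by simp
  have a0: "0 \<le> a" unfolding a_eq by (simp add: sum_nonneg)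
  have b0: "0 \<le> Re (M $$ (1,1))" unfolding m11 by (simp add: sum_nonneg)
  show "0 \<le> a" by (rule a0)
  show "a \<le> 1" using b0 Rm11 by simp
  have M00: "M $$ (0,0) = of_real a" unfolding a_eq m00 ..
  have M11: "M $$ (1,1) = of_real (1 - a)" using m11 Rm11 by (metis Re_complex_of_real)
  have M10: "M $$ (1,0) = cnj (M $$ (0,1))" by (simp add: m mult.commute)
  have cs: "(cmod (M $$ (0,1)))^2 \<le> a * Re (M $$ (1,1))"
    unfolding a_eq m11 using cs_aux[where x="\<lambda>i. k i 0 0" and y="\<lambda>i. k i 1 0" and n=n] by (simp add: m)
  have d_eq: "d = a * (1 - a) - (cmod (M $$ (0,1)))^2" unfolding d_def a_def[symmetric] Rm11 ..
  show "0 \<le> d" using cs unfolding d_eq Rm11 by simp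
  show "d \<le> a * (1 - a)" unfolding d_eq by simp
  have aq: "a * (1 - a) \<le> 1/4"
  proof -
    have "0 \<le> (2*a - 1)^2" by simp
    thus ?thesis by (simp add: power2_eq_square algebra_simps)
  qed
  have dq: "d \<le> 1/4" using aq unfolding d_eq by (smt (verit) zero_le_power2)
  have d0: "0 \<le> d" using cs unfolding d_eq Rm11 by simp
  have P00: "P_XY Ks 0 0 = a/2" unfolding P_XY_def M_def[symmetric] a_def ..
  have P01: "P_XY Ks 0 1 = (1-a)/2" unfolding P_XY_def M_def[symmetric] Rm11 ..
  have M1_00: "M1 $$ (0,0) = 1 - M $$ (0,0)" using sumI[of 0 0] by (simp add: algebra_simps)
  have M1_11: "M1 $$ (1,1) = 1 - M $$ (1,1)" using sumI[of 1 1] by (simp add: algebra_simps)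
  have P10: "P_XY Ks 1 0 = (1-a)/2" unfolding P_XY_def M1_def[symmetric] M1_00 a_def by simp
  have P11: "P_XY Ks 1 1 = a/2" unfolding P_XY_def M1_def[symmetric] M1_11 using Rm11 by simp
  have q0: "P_XY Ks 0 0 + P_XY Ks 1 0 = 1/2" unfolding P00 P10 by (simp add: field_simps)
  have q1: "P_XY Ks 0 1 + P_XY Ks 1 1 = 1/2" unfolding P01 P11 by (simp add: field_simps)
  have HXY: "H_XY Ks = hb a"
    unfolding H_XY_def
    apply (simp only: sum_2 Let_def q0 q1)
    apply (simp only: P00 P01 P10 P11 term_half)
    by (simp add: hb_def)
  define s where "s = sqrt (1 - 4*d)"
  define Z where "Z x = mat n 2 (\<lambda>(i,r). k i r x / 2)" for x
  define W where "W x = mat 2 n (\<lambda>(r,j). cnj (k j r x))" for x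
  define G where "G x = compl_channel Ks (ket_proj x)" for x
  have G: "\<And>x. G x \<in> carrier_mat n n" unfolding G_def compl_channel_def n_def by simp
  have Z: "\<And>x. Z x \<in> carrier_mat n 2" unfolding Z_def by simp
  have W: "\<And>x. W x \<in> carrier_mat 2 n" unfolding W_def by simp
  have e: "\<And>x. x < 2 \<Longrightarrow> (1/2) \<cdot>\<^sub>m G x = Z x * W x"
  proof -
    fix x :: nat assume x: "x < 2"
    show "(1/2) \<cdot>\<^sub>m G x = Z x * W x"
      unfolding G_def compl_proj[OF cK x]
      by (rule eq_matI, auto simp: Z_def W_def sp2 k_def n_def field_simps)
  qed
  have WZ: "\<And>x r t. r < 2 \<Longrightarrow> t < 2 \<Longrightarrow> (W x * Z x) $$ (r,t) = (\<Sum>i<n. k i t x * cnj (k i r x)) / 2"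
    by (simp add: W_def Z_def scalar_prod_def sum_divide_distrib atLeast0LessThan ac_simps)
  have WZc: "\<And>x. W x * Z x \<in> carrier_mat 2 2" by (rule mult_carrier_mat[OF W Z])
  have cm: "cnj (M $$ (0,1)) * M $$ (0,1) = of_real ((cmod (M $$ (0,1)))^2)"
    by (simp add: kcnj mult.commute)
  have d4: "of_real a * of_real (1 - a) - of_real ((cmod (M $$ (0,1)))^2) = (of_real d :: complex)"
    unfolding d_eq by simp
  have cp: "\<And>x. x < 2 \<Longrightarrow> char_poly (W x * Z x) = [:- of_real ((1 + s)/4), 1:] * [:- of_real ((1 - s)/4), 1:]"
  proof -
    fix x :: nat assume x: "x < 2"
    have Mx: "\<And>r t. r < 2 \<Longrightarrow> t < 2 \<Longrightarrow> (W x * Z x) $$ (r,t) = apply_channel Ks (ket_proj x) $$ (t,r) / 2"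
      using mx[OF x] WZ by simp
    have M1_01: "M1 $$ (0,1) = - M $$ (0,1)" using sumI[of 0 1] by (metis add_eq_0_iff less2 numeral_2_eq_2 one_neq_zero zero_less_numeral one_less_numeral_iff semiring_norm(76))
    have M1_10: "M1 $$ (1,0) = - M $$ (1,0)" using sumI[of 1 0] by (metis add_eq_0_iff one_neq_zero zero_less_numeral one_less_numeral_iff semiring_norm(76))
    obtain A where A: "A = M \<or> A = M1" and AP: "apply_channel Ks (ket_proj x) = A"
      using less2[OF x] unfolding M_def M1_def by auto
    have tr1: "M1 $$ (0,0) + M1 $$ (1,1) = 1"
    proof -
      have "M1 $$ (0,0) + M1 $$ (1,1) = 2 - (M $$ (0,0) + M $$ (1,1))"
        unfolding M1_00 M1_11 by (simp add: algebra_simps)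
      thus ?thesis unfolding tr by simp
    qed
    have trA: "A $$ (0,0) + A $$ (1,1) = 1" using A tr tr1 by auto
    have dtA: "A $$ (0,0) * A $$ (1,1) - A $$ (1,0) * A $$ (0,1) = of_real d"
      using A
    proof
      assume "A = M" thus ?thesis using M00 M11 M10 cm d4 by simp
    next
      assume AM1: "A = M1"
      have a1: "M1 $$ (0,0) = of_real (1 - a)" unfolding M1_00 M00 by simp
      have a2: "M1 $$ (1,1) = of_real a" unfolding M1_11 M11 by simp
      have "M1 $$ (0,0) * M1 $$ (1,1) - M1 $$ (1,0) * M1 $$ (0,1) = of_real a * of_real (1 - a) - cnj (M $$ (0,1)) * M $$ (0,1)"
        unfolding a1 a2 M1_01 M1_10 M10 by simp
      thus ?thesis using AM1 cm d4 by simp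
    qed
    have B: "\<And>r t. r < 2 \<Longrightarrow> t < 2 \<Longrightarrow> (W x * Z x) $$ (r,t) = A $$ (t,r) / 2"
      using Mx AP by simp
    show "char_poly (W x * Z x) = [:- of_real ((1 + s)/4), 1:] * [:- of_real ((1 - s)/4), 1:]"
      unfolding s_def
    proof (rule cp_form[OF WZc _ _ d0 dq])
      show "(W x * Z x) $$ (0,0) + (W x * Z x) $$ (1,1) = 1/2"
        using B[of 0 0] B[of 1 1] trA by (simp add: add_divide_distrib[symmetric])
      have "(W x * Z x) $$ (0,0) * (W x * Z x) $$ (1,1) - (W x * Z x) $$ (0,1) * (W x * Z x) $$ (1,0)
         = (A $$ (0,0) * A $$ (1,1) - A $$ (1,0) * A $$ (0,1)) / 4"
      proof -
        have b00: "(W x * Z x) $$ (0,0) = A $$ (0,0) / 2" using B by simp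
        have b11: "(W x * Z x) $$ (1,1) = A $$ (1,1) / 2" using B by simp
        have b01: "(W x * Z x) $$ (0,1) = A $$ (1,0) / 2" using B by simp
        have b10: "(W x * Z x) $$ (1,0) = A $$ (0,1) / 2" using B by simp
        show ?thesis unfolding b00 b11 b01 b10 by (simp add: field_simps)
      qed
      thus "(W x * Z x) $$ (0,0) * (W x * Z x) $$ (1,1) - (W x * Z x) $$ (0,1) * (W x * Z x) $$ (1,0) = of_real (d / 4)"
        unfolding dtA by simp
    qed
  qed
  have rXE: "rho_XE Ks = four_block_mat ((1/2) \<cdot>\<^sub>m G 0) (0\<^sub>m n n) (0\<^sub>m n n) ((1/2) \<cdot>\<^sub>m G 1)"
    unfolding rho_XE_def G_def n_def ..
  have vXE: "vn_entropy (rho_XE Ks) = 2 * (eta ((1 + s)/4) + eta ((1 - s)/4))"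
    unfolding rXE
    by (subst vn_block[OF G G Z W Z W e e cp cp], auto)
  show "key_rate Ks = 2 * (eta ((1 + sqrt (1 - 4*d))/4) + eta ((1 - sqrt (1 - 4*d))/4)) - vn_entropy (rho_E Ks) - hb a"
    unfolding key_rate_def H_XE_def HXY vXE s_def ..
qed

lemma carrier22[simp]: "A \<in> carrier_mat 2 2 \<Longrightarrow> B \<in> carrier_mat 2 2 \<Longrightarrow> A * B \<in> carrier_mat 2 2"
  by auto
lemma assoc22: "A \<in> carrier_mat 2 2 \<Longrightarrow> B \<in> carrier_mat 2 2 \<Longrightarrow> C \<in> carrier_mat 2 2 \<Longrightarrow> A * B * C = A * (B * C)"
  by (rule assoc_mult_mat)
lemma distl22: "A \<in> carrier_mat 2 2 \<Longrightarrow> B \<in> carrier_mat 2 2 \<Longrightarrow> C \<in> carrier_mat 2 2 \<Longrightarrow> A * (B + C) = A * B + A * C"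
  by (rule mult_add_distrib_mat)
lemma distr22: "A \<in> carrier_mat 2 2 \<Longrightarrow> B \<in> carrier_mat 2 2 \<Longrightarrow> C \<in> carrier_mat 2 2 \<Longrightarrow> (B + C) * A = B * A + C * A"
  by (rule add_mult_distrib_mat)

lemma adjoint_mult: fixes A B :: "complex mat" assumes A: "A \<in> carrier_mat n m" and B: "B \<in> carrier_mat m k"
  shows "mat_adjoint (A * B) = mat_adjoint B * mat_adjoint A"
proof (rule eq_matI)
  fix i j assume i: "i < dim_row (mat_adjoint B * mat_adjoint A)" and j: "j < dim_col (mat_adjoint B * mat_adjoint A)"
  have i': "i < k" and j': "j < n" using i j A B by auto
  have "mat_adjoint (A * B) $$ (i,j) = cnj ((A * B) $$ (j,i))" using i' j' A B by (subst adj_index, auto)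
  also have "\<dots> = (\<Sum>l<m. cnj (A $$ (j,l)) * cnj (B $$ (l,i)))"
    using i' j' A B by (simp add: scalar_prod_def atLeast0LessThan)
  also have "\<dots> = (mat_adjoint B * mat_adjoint A) $$ (i,j)"
    using i' j' A B by (simp add: scalar_prod_def atLeast0LessThan ac_simps)
  finally show "mat_adjoint (A * B) $$ (i,j) = (mat_adjoint B * mat_adjoint A) $$ (i,j)" .
qed (insert A B, auto)


lemma mtrace_comm: assumes A: "A \<in> carrier_mat 2 2" and B: "B \<in> carrier_mat 2 2"
  shows "mtrace (A * B) = mtrace (B * A)"
  unfolding mtrace2[OF carrier22[OF A B]] mtrace2[OF carrier22[OF B A]]
  by (simp add: mult22[OF A B] mult22[OF B A] algebra_simps)

lemma unitary2_carrier: "unitary2 U \<Longrightarrow> U \<in> carrier_mat 2 2" unfolding unitary2_def by auto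

lemma unitary2_left: assumes "unitary2 U" shows "mat_adjoint U * U = 1\<^sub>m 2"
  using assms unfolding unitary2_def
  by (intro mat_mult_left_right_inverse[of U 2], auto)

lemma unitary2_right: "unitary2 U \<Longrightarrow> U * mat_adjoint U = 1\<^sub>m 2" unfolding unitary2_def by auto

lemma msum2_cons: "msum2 f (K # Ks) = f K + msum2 f Ks" by (simp add: msum2_def)
lemma msum2_nil: "msum2 f [] = 0\<^sub>m 2 2" by (simp add: msum2_def)

lemma msum2_conj: assumes cK: "\<forall>K\<in>set Ks. f K \<in> carrier_mat 2 2" and U: "U \<in> carrier_mat 2 2" and V: "V \<in> carrier_mat 2 2"
  shows "msum2 (\<lambda>K. U * f K * V) Ks = U * msum2 f Ks * V"
  using cK
proof (induct Ks)
  case Nil thus ?case using U V by (simp add: msum2_nil)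
next
  case (Cons K Ks)
  have fK: "f K \<in> carrier_mat 2 2" and c: "msum2 f Ks \<in> carrier_mat 2 2" using Cons msum2_carrier by auto
  have "msum2 (\<lambda>K. U * f K * V) (K # Ks) = U * f K * V + U * msum2 f Ks * V"
    using Cons by (simp add: msum2_cons)
  also have "\<dots> = U * (f K + msum2 f Ks) * V"
    using fK c U V by (simp add: distl22 distr22)
  finally show ?case by (simp add: msum2_cons)
qed

lemma apply_compose: assumes cK: "\<forall>K\<in>set Ks. K \<in> carrier_mat 2 2" and U: "U \<in> carrier_mat 2 2" and V: "V \<in> carrier_mat 2 2"
  and r: "\<rho> \<in> carrier_mat 2 2"
  shows "apply_channel (map (\<lambda>K. U * K * V) Ks) \<rho> = U * apply_channel Ks (V * \<rho> * mat_adjoint V) * mat_adjoint U"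
proof -
  have eq: "\<And>K. K \<in> carrier_mat 2 2 \<Longrightarrow> (U * K * V) * \<rho> * mat_adjoint (U * K * V) = U * (K * (V * \<rho> * mat_adjoint V) * mat_adjoint K) * mat_adjoint U"
  proof -
    fix K :: "complex mat" assume K: "K \<in> carrier_mat 2 2"
    have "mat_adjoint (U * K * V) = mat_adjoint V * mat_adjoint K * mat_adjoint U"
      using U K V by (simp add: adjoint_mult[of _ 2 2 _ 2])
    thus "(U * K * V) * \<rho> * mat_adjoint (U * K * V) = U * (K * (V * \<rho> * mat_adjoint V) * mat_adjoint K) * mat_adjoint U"
      using U K V r by (simp add: assoc22)
  qed
  have "apply_channel (map (\<lambda>K. U * K * V) Ks) \<rho> = msum2 (\<lambda>K. U * (K * (V * \<rho> * mat_adjoint V) * mat_adjoint K) * mat_adjoint U) Ks"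
    unfolding apply_channel_def msum2_def using cK eq by (induct Ks, auto)
  also have "\<dots> = U * apply_channel Ks (V * \<rho> * mat_adjoint V) * mat_adjoint U"
    unfolding apply_channel_def
    by (rule msum2_conj, insert cK U V r, auto)
  finally show ?thesis .
qed

lemma pauli_carrier[simp]: "pauli a \<in> carrier_mat 2 2"
proof (rule carrier_matI)
  show "dim_row (pauli a) = 2" by (simp add: pauli_def mat_of_rows_list_def)
  show "dim_col (pauli a) = 2" by (simp add: pauli_def mat_of_rows_list_def)
qed

lemma pauli0: "pauli 0 $$ (0,0) = 1" "pauli 0 $$ (0,1) = 0" "pauli 0 $$ (1,0) = 0" "pauli 0 $$ (1,1) = -1"
  by (simp_all add: pauli_def mat_of_rows_list_def)
lemma pauli1: "pauli 1 $$ (0,0) = 0" "pauli 1 $$ (0,1) = 1" "pauli 1 $$ (1,0) = 1" "pauli 1 $$ (1,1) = 0"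
  by (simp_all add: pauli_def mat_of_rows_list_def)
lemma pauli2: "pauli 2 $$ (0,0) = 0" "pauli 2 $$ (0,1) = - \<i>" "pauli 2 $$ (1,0) = \<i>" "pauli 2 $$ (1,1) = 0"
  by (simp_all add: pauli_def mat_of_rows_list_def)

lemma mtrace_pauli:
  assumes E: "E \<in> carrier_mat 2 2"
  shows "mtrace (pauli 0 * E) = E $$ (0,0) - E $$ (1,1)"
    "mtrace (pauli 1 * E) = E $$ (1,0) + E $$ (0,1)"
    "mtrace (pauli 2 * E) = - \<i> * E $$ (1,0) + \<i> * E $$ (0,1)"
  using E by (simp_all add: mtrace2[OF carrier22[OF pauli_carrier E]] mult22[OF pauli_carrier E] pauli0 pauli1 pauli2
     pauli0[simplified] pauli1[simplified] pauli2[simplified])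

lemma unital_EI: assumes qc: "qubit_channel Ks" and un: "unital Ks"
  shows "apply_channel Ks (1\<^sub>m 2) = 1\<^sub>m 2"
proof -
  have cK: "\<forall>K\<in>set Ks. K \<in> carrier_mat 2 2" by (rule qc_carrier_all[OF qc])
  define E where "E = apply_channel Ks (1\<^sub>m 2)"
  have Ec: "E \<in> carrier_mat 2 2" unfolding E_def apply_channel_def
    by (rule msum2_carrier, insert cK, auto)
  define n where "n = length Ks"
  define k where "k i r c = Ks!i $$ (r,c)" for i r c
  have e: "\<And>s t. s < 2 \<Longrightarrow> t < 2 \<Longrightarrow> E $$ (s,t) = (\<Sum>i<n. k i s 0 * cnj (k i t 0) + k i s 1 * cnj (k i t 1))"
    unfolding E_def k_def n_def by (rule apply_one[OF cK])
  have kcnj': "\<And>z. cnj z * z = of_real ((cmod z)^2)" by (metis kcnj mult.commute)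
  define S where "S r c = (\<Sum>i<n. (cmod (k i r c))^2)" for r c
  have e10: "E $$ (1,0) = cnj (E $$ (0,1))" by (simp add: e mult.commute)
  have e00: "E $$ (0,0) = of_real (S 0 0 + S 0 1)" by (simp add: e kcnj S_def sum.distrib)
  have e11: "E $$ (1,1) = of_real (S 1 0 + S 1 1)" by (simp add: e kcnj S_def sum.distrib)
  have tp0: "S 0 0 + S 1 0 = 1"
  proof -
    have "(\<Sum>i<n. cnj (k i 0 0) * k i 0 0 + cnj (k i 1 0) * k i 1 0) = 1"
      using tp_idx[OF qc, of 0 0] unfolding k_def n_def by simp
    hence "of_real (S 0 0 + S 1 0) = (1::complex)" by (simp add: kcnj' S_def sum.distrib)
    thus ?thesis by (metis of_real_eq_1_iff)
  qed
  have tp1: "S 0 1 + S 1 1 = 1"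
  proof -
    have "(\<Sum>i<n. cnj (k i 0 1) * k i 0 1 + cnj (k i 1 1) * k i 1 1) = 1"
      using tp_idx[OF qc, of 1 1] unfolding k_def n_def by simp
    hence "of_real (S 0 1 + S 1 1) = (1::complex)" by (simp add: kcnj' S_def sum.distrib)
    thus ?thesis by (metis of_real_eq_1_iff)
  qed
  have tr: "E $$ (0,0) + E $$ (1,1) = 2"
  proof -
    have "S 0 0 + S 0 1 + (S 1 0 + S 1 1) = 2" using tp0 tp1 by simp
    hence "of_real (S 0 0 + S 0 1) + of_real (S 1 0 + S 1 1) = (2::complex)"
      by (metis of_real_add of_real_numeral)
    thus ?thesis unfolding e00 e11 .
  qed
  have st: "\<And>a. a < 3 \<Longrightarrow> Re (mtrace (pauli a * E)) = 0"
  proof -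
    fix a :: nat assume a: "a < 3"
    have "stokes_t Ks $ a = 0" using un a unfolding unital_def by simp
    thus "Re (mtrace (pauli a * E)) = 0" using a unfolding stokes_t_def E_def by simp
  qed
  have z: "Re (E $$ (0,0)) = Re (E $$ (1,1))" using st[of 0] mtrace_pauli[OF Ec] by simp
  have x: "Re (E $$ (0,1)) = 0" using st[of 1] mtrace_pauli[OF Ec] e10 by simp
  have y: "Im (E $$ (0,1)) = 0" using st[of 2] mtrace_pauli[OF Ec] e10 by simp
  have E01: "E $$ (0,1) = 0" using x y by (simp add: complex_eq_iff)
  have E10: "E $$ (1,0) = 0" using E01 e10 by simp
  have E00: "E $$ (0,0) = 1" and E11: "E $$ (1,1) = 1"
  proof -
    have r: "Re (E $$ (0,0)) + Re (E $$ (1,1)) = 2" using arg_cong[OF tr, of Re] by simp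
    have i0: "Im (E $$ (0,0)) = 0" unfolding e00 by simp
    have i1: "Im (E $$ (1,1)) = 0" unfolding e11 by simp
    show "E $$ (0,0) = 1" using r z i0 by (simp add: complex_eq_iff)
    show "E $$ (1,1) = 1" using r z i1 by (simp add: complex_eq_iff)
  qed
  show ?thesis unfolding E_def[symmetric]
  proof (rule eq_matI)
    fix i j assume "i < dim_row (1\<^sub>m 2 :: complex mat)" "j < dim_col (1\<^sub>m 2 :: complex mat)"
    hence i: "i = 0 \<or> i = 1" and j: "j = 0 \<or> j = 1" by auto
    show "E $$ (i,j) = (1\<^sub>m 2 :: complex mat) $$ (i,j)"
      using i j E00 E11 E01 E10 by (elim disjE, simp_all)
  qed (insert Ec, auto)
qed

lemma msum2_map: "msum2 f (map g Ks) = msum2 (\<lambda>K. f (g K)) Ks"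
  by (induct Ks, auto simp: msum2_def)

lemma msum2_cong: "(\<And>K. K \<in> set Ks \<Longrightarrow> f K = g K) \<Longrightarrow> msum2 f Ks = msum2 g Ks"
  by (induct Ks, auto simp: msum2_def)

lemma adj_cancel: assumes U: "unitary2 U" and X: "X \<in> carrier_mat 2 2"
  shows "mat_adjoint U * (U * X) = X"
proof -
  have Uc: "U \<in> carrier_mat 2 2" by (rule unitary2_carrier[OF U])
  have "mat_adjoint U * (U * X) = (mat_adjoint U * U) * X" using Uc X by (simp add: assoc22)
  also have "\<dots> = X" using unitary2_left[OF U] X by simp
  finally show ?thesis .
qed

lemma adj_cancel2: assumes U: "unitary2 U" and X: "X \<in> carrier_mat 2 2"
  shows "U * (mat_adjoint U * X) = X"
proof -
  have Uc: "U \<in> carrier_mat 2 2" by (rule unitary2_carrier[OF U])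
  have "U * (mat_adjoint U * X) = (U * mat_adjoint U) * X" using Uc X by (simp add: assoc22)
  also have "\<dots> = X" using unitary2_right[OF U] X by simp
  finally show ?thesis .
qed

lemma adj_mult3: fixes U K V :: "complex mat" assumes "U \<in> carrier_mat 2 2" "K \<in> carrier_mat 2 2" "V \<in> carrier_mat 2 2"
  shows "mat_adjoint (U * K * V) = mat_adjoint V * (mat_adjoint K * mat_adjoint U)"
proof -
  have UK: "U * K \<in> carrier_mat 2 2" using assms by simp
  have "mat_adjoint (U * K * V) = mat_adjoint V * mat_adjoint (U * K)"
    by (rule adjoint_mult[OF UK assms(3)])
  also have "mat_adjoint (U * K) = mat_adjoint K * mat_adjoint U"
    by (rule adjoint_mult[OF assms(1,2)])
  finally show ?thesis .
qed

lemma compose_carrier: assumes qc: "qubit_channel Ks" and UA: "unitary2 UA" and UB: "unitary2 UB"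
  shows "\<forall>K\<in>set (compose_unitaries UB Ks UA). K \<in> carrier_mat 2 2"
  using qc_carrier_all[OF qc] unitary2_carrier[OF UA] unitary2_carrier[OF UB]
  unfolding compose_unitaries_def by auto

lemma compose_qc: assumes qc: "qubit_channel Ks" and UA: "unitary2 UA" and UB: "unitary2 UB"
  shows "qubit_channel (compose_unitaries UB Ks UA)"
proof -
  have cK: "\<forall>K\<in>set Ks. K \<in> carrier_mat 2 2" by (rule qc_carrier_all[OF qc])
  have A: "UA \<in> carrier_mat 2 2" and B: "UB \<in> carrier_mat 2 2" using UA UB by (auto simp: unitary2_carrier)
  have pt: "\<And>K. K \<in> set Ks \<Longrightarrow> mat_adjoint (UB * K * UA) * (UB * K * UA) = mat_adjoint UA * (mat_adjoint K * K) * UA"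
  proof -
    fix K assume "K \<in> set Ks"
    hence K: "K \<in> carrier_mat 2 2" using cK by auto
    show "mat_adjoint (UB * K * UA) * (UB * K * UA) = mat_adjoint UA * (mat_adjoint K * K) * UA"
      using K A B by (simp only: adj_mult3[OF B K A], simp add: assoc22 adj_cancel[OF UB])
  qed
  have "msum2 (\<lambda>K. mat_adjoint K * K) (compose_unitaries UB Ks UA) = msum2 (\<lambda>K. mat_adjoint UA * (mat_adjoint K * K) * UA) Ks"
    unfolding compose_unitaries_def msum2_map by (rule msum2_cong, rule pt)
  also have "\<dots> = mat_adjoint UA * msum2 (\<lambda>K. mat_adjoint K * K) Ks * UA"
    by (rule msum2_conj, insert cK A, auto)
  also have "\<dots> = 1\<^sub>m 2" using qc unitary2_left[OF UA] A unfolding qubit_channel_def by simp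
  finally show ?thesis using compose_carrier[OF qc UA UB] unfolding qubit_channel_def by simp
qed

lemma compose_EI: assumes qc: "qubit_channel Ks" and UA: "unitary2 UA" and UB: "unitary2 UB"
  and EI: "apply_channel Ks (1\<^sub>m 2) = 1\<^sub>m 2"
  shows "apply_channel (compose_unitaries UB Ks UA) (1\<^sub>m 2) = 1\<^sub>m 2"
proof -
  have cK: "\<forall>K\<in>set Ks. K \<in> carrier_mat 2 2" by (rule qc_carrier_all[OF qc])
  have A: "UA \<in> carrier_mat 2 2" and B: "UB \<in> carrier_mat 2 2" using UA UB by (auto simp: unitary2_carrier)
  have "apply_channel (compose_unitaries UB Ks UA) (1\<^sub>m 2) = UB * apply_channel Ks (UA * 1\<^sub>m 2 * mat_adjoint UA) * mat_adjoint UB"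
    unfolding compose_unitaries_def by (rule apply_compose[OF cK B A], simp)
  also have "UA * 1\<^sub>m 2 * mat_adjoint UA = 1\<^sub>m 2" using A unitary2_right[OF UA] by simp
  finally show ?thesis using EI B unitary2_right[OF UB] by simp
qed

lemma frob_split: assumes K: "K \<in> carrier_mat 2 2" and L: "L \<in> carrier_mat 2 2"
  shows "mtrace (K * ket_proj 0 * mat_adjoint L) + mtrace (K * ket_proj 1 * mat_adjoint L) = mtrace (K * mat_adjoint L)"
proof -
  have e0: "mtrace (K * ket_proj 0 * mat_adjoint L) = K $$ (0,0) * cnj (L $$ (0,0)) + K $$ (1,0) * cnj (L $$ (1,0))"
    by (rule compl_entry[OF K L], simp)
  have e1: "mtrace (K * ket_proj 1 * mat_adjoint L) = K $$ (0,1) * cnj (L $$ (0,1)) + K $$ (1,1) * cnj (L $$ (1,1))"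
    by (rule compl_entry[OF K L], simp)
  show ?thesis unfolding e0 e1 mtrace2[OF carrier22[OF K adj_carrier[OF L]]]
    by (simp add: mult22[OF K adj_carrier[OF L]] adj22[OF L])
qed

lemma frob_inv: assumes K: "K \<in> carrier_mat 2 2" and L: "L \<in> carrier_mat 2 2" and UA: "unitary2 UA" and UB: "unitary2 UB"
  shows "mtrace ((UB * K * UA) * mat_adjoint (UB * L * UA)) = mtrace (K * mat_adjoint L)"
proof -
  have A: "UA \<in> carrier_mat 2 2" and B: "UB \<in> carrier_mat 2 2" using UA UB by (auto simp: unitary2_carrier)
  have "(UB * K * UA) * mat_adjoint (UB * L * UA) = UB * ((K * mat_adjoint L) * mat_adjoint UB)"
    using K L A B by (simp only: adj_mult3[OF B L A], simp add: assoc22 adj_cancel2[OF UA])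
  hence "mtrace ((UB * K * UA) * mat_adjoint (UB * L * UA)) = mtrace (((K * mat_adjoint L) * mat_adjoint UB) * UB)"
    using K L A B by (simp add: mtrace_comm[of UB])
  also have "((K * mat_adjoint L) * mat_adjoint UB) * UB = K * mat_adjoint L"
    using K L A B by (simp add: assoc22 unitary2_left[OF UB])
  finally show ?thesis .
qed

lemma rho_E_entries: assumes cK: "\<forall>K\<in>set Ks. K \<in> carrier_mat 2 2"
  shows "rho_E Ks = mat (length Ks) (length Ks) (\<lambda>(i,j). (1/2) * mtrace (Ks!i * mat_adjoint (Ks!j)))"
proof (rule eq_matI)
  fix i j assume i: "i < dim_row (mat (length Ks) (length Ks) (\<lambda>(i,j). (1/2) * mtrace (Ks!i * mat_adjoint (Ks!j))))"
    and j: "j < dim_col (mat (length Ks) (length Ks) (\<lambda>(i,j). (1/2) * mtrace (Ks!i * mat_adjoint (Ks!j))))"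
  have Ki: "Ks!i \<in> carrier_mat 2 2" and Kj: "Ks!j \<in> carrier_mat 2 2" using i j cK by auto
  show "rho_E Ks $$ (i,j) = mat (length Ks) (length Ks) (\<lambda>(i,j). (1/2) * mtrace (Ks!i * mat_adjoint (Ks!j))) $$ (i,j)"
    using i j frob_split[OF Ki Kj]
    by (simp add: rho_E_def compl_channel_def algebra_simps flip: distrib_left)
qed (auto simp: rho_E_def compl_channel_def)

lemma rho_E_compose: assumes qc: "qubit_channel Ks" and UA: "unitary2 UA" and UB: "unitary2 UB"
  shows "rho_E (compose_unitaries UB Ks UA) = rho_E Ks"
proof -
  have cK: "\<forall>K\<in>set Ks. K \<in> carrier_mat 2 2" by (rule qc_carrier_all[OF qc])
  show ?thesis
    unfolding rho_E_entries[OF cK] rho_E_entries[OF compose_carrier[OF qc UA UB]]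
    by (rule eq_matI, insert cK, auto simp: compose_unitaries_def frob_inv[OF _ _ UA UB])
qed

lemma post_compose: assumes qc: "qubit_channel Ks"
  shows "post_unitary UB Ks = compose_unitaries UB Ks (1\<^sub>m 2)"
  unfolding post_unitary_def compose_unitaries_def
  using qc_carrier_all[OF qc] by (intro map_cong, auto)

lemma unitary2_one: "unitary2 (1\<^sub>m 2)" unfolding unitary2_def
  by (rule conjI, simp, rule eq_matI, auto simp: adj_index)

lemma M_props:
  assumes qc: "qubit_channel Ks" and EI: "apply_channel Ks (1\<^sub>m 2) = 1\<^sub>m 2"
  defines "M \<equiv> apply_channel Ks (ket_proj 0)" and "M1 \<equiv> apply_channel Ks (ket_proj 1)"
  shows "\<And>s t. s < 2 \<Longrightarrow> t < 2 \<Longrightarrow> M1 $$ (s,t) = (if s = t then 1 else 0) - M $$ (s,t)"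
    and "M $$ (1,1) = 1 - M $$ (0,0)"
    and "M $$ (0,0) = of_real (Re (M $$ (0,0)))"
    and "M $$ (1,0) = cnj (M $$ (0,1))"
    and "\<And>s t. s < 2 \<Longrightarrow> t < 2 \<Longrightarrow> apply_channel Ks (pauli 0) $$ (s,t) = M $$ (s,t) - M1 $$ (s,t)"
proof -
  have cK: "\<forall>K\<in>set Ks. K \<in> carrier_mat 2 2" by (rule qc_carrier_all[OF qc])
  define n where "n = length Ks"
  define k where "k i r c = Ks!i $$ (r,c)" for i r c
  have mx: "\<And>x s t. x < 2 \<Longrightarrow> s < 2 \<Longrightarrow> t < 2 \<Longrightarrow> apply_channel Ks (ket_proj x) $$ (s,t) = (\<Sum>i<n. k i s x * cnj (k i t x))"
    unfolding k_def n_def using apply_proj[OF cK] by simp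
  have m: "\<And>s t. s < 2 \<Longrightarrow> t < 2 \<Longrightarrow> M $$ (s,t) = (\<Sum>i<n. k i s 0 * cnj (k i t 0))"
    unfolding M_def using mx by simp
  have m1: "\<And>s t. s < 2 \<Longrightarrow> t < 2 \<Longrightarrow> M1 $$ (s,t) = (\<Sum>i<n. k i s 1 * cnj (k i t 1))"
    unfolding M1_def using mx by simp
  show sumI: "\<And>s t. s < 2 \<Longrightarrow> t < 2 \<Longrightarrow> M1 $$ (s,t) = (if s = t then 1 else 0) - M $$ (s,t)"
  proof -
    fix s t :: nat assume st: "s < 2" "t < 2"
    have "apply_channel Ks (1\<^sub>m 2) $$ (s,t) = (\<Sum>i<n. k i s 0 * cnj (k i t 0) + k i s 1 * cnj (k i t 1))"
      unfolding k_def n_def by (rule apply_one[OF cK st])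
    hence "(1\<^sub>m 2 :: complex mat) $$ (s,t) = (\<Sum>i<n. k i s 0 * cnj (k i t 0) + k i s 1 * cnj (k i t 1))"
      unfolding EI .
    hence "M $$ (s,t) + M1 $$ (s,t) = (if s = t then 1 else 0)"
      using st by (simp add: m m1 sum.distrib)
    thus "M1 $$ (s,t) = (if s = t then 1 else 0) - M $$ (s,t)" by (simp add: algebra_simps)
  qed
  have tr: "M $$ (0,0) + M $$ (1,1) = 1"
  proof -
    have "(\<Sum>i<n. cnj (k i 0 0) * k i 0 0 + cnj (k i 1 0) * k i 1 0) = 1"
      using tp_idx[OF qc, of 0 0] unfolding k_def n_def by simp
    thus ?thesis by (simp add: m sum.distrib ac_simps)
  qed
  show "M $$ (1,1) = 1 - M $$ (0,0)" using tr by (simp add: algebra_simps)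
  have m00: "M $$ (0,0) = of_real (\<Sum>i<n. (cmod (k i 0 0))^2)"
    by (simp add: m kcnj)
  thus "M $$ (0,0) = of_real (Re (M $$ (0,0)))" by simp
  show "M $$ (1,0) = cnj (M $$ (0,1))" by (simp add: m mult.commute)
  fix s t :: nat assume st: "s < 2" "t < 2"
  have "apply_channel Ks (pauli 0) $$ (s,t) = (\<Sum>i<n. k i s 0 * cnj (k i t 0) - k i s 1 * cnj (k i t 1))"
    unfolding k_def n_def
    by (subst apply_idx[OF cK pauli_carrier st], rule sum.cong, auto simp: pauli0 pauli0[simplified])
  thus "apply_channel Ks (pauli 0) $$ (s,t) = M $$ (s,t) - M1 $$ (s,t)"
    using st by (simp add: m m1 sum_subtractf)
qed

lemma sandwich_herm: assumes U: "U \<in> carrier_mat 2 2" and r: "\<rho> \<in> carrier_mat 2 2"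
  and h: "\<rho> $$ (1,0) = cnj (\<rho> $$ (0,1))" "cnj (\<rho> $$ (0,0)) = \<rho> $$ (0,0)" "cnj (\<rho> $$ (1,1)) = \<rho> $$ (1,1)"
  shows "(U * \<rho> * mat_adjoint U) $$ (1,0) = cnj ((U * \<rho> * mat_adjoint U) $$ (0,1))"
proof -
  have e1: "(U * \<rho> * mat_adjoint U) $$ (1,0) =
    (U $$ (1,0) * \<rho> $$ (0,0) + U $$ (1,1) * \<rho> $$ (1,0)) * cnj (U $$ (0,0)) +
    (U $$ (1,0) * \<rho> $$ (0,1) + U $$ (1,1) * \<rho> $$ (1,1)) * cnj (U $$ (0,1))"
    by (rule sandwich22[OF U r], simp_all)
  have e2: "(U * \<rho> * mat_adjoint U) $$ (0,1) =
    (U $$ (0,0) * \<rho> $$ (0,0) + U $$ (0,1) * \<rho> $$ (1,0)) * cnj (U $$ (1,0)) +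
    (U $$ (0,0) * \<rho> $$ (0,1) + U $$ (0,1) * \<rho> $$ (1,1)) * cnj (U $$ (1,1))"
    by (rule sandwich22[OF U r], simp_all)
  show ?thesis unfolding e1 e2 h(1)
    by (simp add: algebra_simps h(2) h(3) h(3)[simplified])
qed

lemma apply_single: assumes U: "U \<in> carrier_mat 2 2" and r: "\<rho> \<in> carrier_mat 2 2"
  shows "apply_channel [U] \<rho> = U * \<rho> * mat_adjoint U"
  using U r by (simp add: apply_channel_def msum2_def)

lemma h_O: assumes U: "U \<in> carrier_mat 2 2" and c: "c < 3"
  shows "(U * pauli c * mat_adjoint U) $$ (0,1) = of_real (stokes_R [U] $$ (1,c)) - \<i> * of_real (stokes_R [U] $$ (2,c))"
proof -
  define H where "H = U * pauli c * mat_adjoint U"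
  have Hc: "H \<in> carrier_mat 2 2" unfolding H_def using U by simp
  have herm: "pauli c $$ (1,0) = cnj (pauli c $$ (0,1)) \<and> cnj (pauli c $$ (0,0)) = pauli c $$ (0,0) \<and> cnj (pauli c $$ (1,1)) = pauli c $$ (1,1)"
  proof -
    have "c = 0 \<or> c = 1 \<or> c = 2" using c by auto
    thus ?thesis by (elim disjE, simp_all add: pauli0 pauli1 pauli2 pauli0[simplified] pauli1[simplified] pauli2[simplified])
  qed
  have H10: "H $$ (1,0) = cnj (H $$ (0,1))" unfolding H_def
    using herm by (intro sandwich_herm[OF U pauli_carrier], auto)
  have O1: "stokes_R [U] $$ (1,c) = Re (mtrace (pauli 1 * H)) / 2"
    unfolding stokes_R_def H_def using c by (simp add: apply_single[OF U pauli_carrier])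
  have O2: "stokes_R [U] $$ (2,c) = Re (mtrace (pauli 2 * H)) / 2"
    unfolding stokes_R_def H_def using c by (simp add: apply_single[OF U pauli_carrier])
  have "stokes_R [U] $$ (1,c) = Re (H $$ (0,1))" unfolding O1 mtrace_pauli[OF Hc] H10 by simp
  moreover have "stokes_R [U] $$ (2,c) = - Im (H $$ (0,1))" unfolding O2 mtrace_pauli[OF Hc] H10 by simp
  ultimately show ?thesis unfolding H_def[symmetric] by (simp add: complex_eq_iff)
qed

lemma sum_3: "(\<Sum>x<(3::nat). f x) = f 0 + f 1 + f 2"
proof -
  have "{..<3::nat} = {0,1,2}" by auto
  thus ?thesis by (simp add: ac_simps)
qed

lemma offdiag_zero:
  assumes qc: "qubit_channel Ks" and EI: "apply_channel Ks (1\<^sub>m 2) = 1\<^sub>m 2"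
    and rot: "rotation3 OB"
    and al: "\<exists>c. \<forall>j<3. OB $$ (0, j) = c * stokes_R Ks $$ (j, 0)"
    and UB: "unitary2 UB" and OBdef: "stokes_R [UB] = OB"
  shows "(UB * apply_channel Ks (ket_proj 0) * mat_adjoint UB) $$ (0,1) = 0"
proof -
  have cK: "\<forall>K\<in>set Ks. K \<in> carrier_mat 2 2" by (rule qc_carrier_all[OF qc])
  have U: "UB \<in> carrier_mat 2 2" by (rule unitary2_carrier[OF UB])
  define M where "M = apply_channel Ks (ket_proj 0)"
  define M1 where "M1 = apply_channel Ks (ket_proj 1)"
  define E0 where "E0 = apply_channel Ks (pauli 0)"
  have Mc: "M \<in> carrier_mat 2 2" unfolding M_def apply_channel_def by (rule msum2_carrier, insert cK, auto)
  have E0c: "E0 \<in> carrier_mat 2 2" unfolding E0_def apply_channel_def by (rule msum2_carrier, insert cK, auto)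
  note MP = M_props[OF qc EI, folded M_def M1_def E0_def]
  define m where "m = M $$ (0,1)"
  define a where "a = Re (M $$ (0,0))"
  have M00: "M $$ (0,0) = of_real a" unfolding a_def using MP(3) .
  have M11: "M $$ (1,1) = 1 - of_real a" using MP(2) M00 by simp
  have M10: "M $$ (1,0) = cnj m" unfolding m_def using MP(4) .
  have M1_00: "M1 $$ (0,0) = 1 - of_real a" using MP(1)[of 0 0] M00 by simp
  have M1_11: "M1 $$ (1,1) = of_real a" using MP(1)[of 1 1] M11 by simp
  have M1_01: "M1 $$ (0,1) = - m" using MP(1)[of 0 1] unfolding m_def by simp
  have M1_10: "M1 $$ (1,0) = - cnj m" using MP(1)[of 1 0] M10 by simp
  have E00: "E0 $$ (0,0) = 2 * of_real a - 1" using MP(5)[of 0 0] M00 M1_00 by simp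
  have E11: "E0 $$ (1,1) = 1 - 2 * of_real a" using MP(5)[of 1 1] M11 M1_11 by simp
  have E01: "E0 $$ (0,1) = 2 * m" using MP(5)[of 0 1] M1_01 unfolding m_def by simp
  have E10: "E0 $$ (1,0) = 2 * cnj m" using MP(5)[of 1 0] M10 M1_10 by simp
  define r where "r c = stokes_R Ks $$ (c,0)" for c
  have rdef: "\<And>c. c < 3 \<Longrightarrow> r c = Re (mtrace (pauli c * E0)) / 2"
    unfolding r_def stokes_R_def E0_def by simp
  have r0: "r 0 = 2 * a - 1" using rdef[of 0] mtrace_pauli(1)[OF E0c] E00 E11 by simp
  have r1: "r 1 = 2 * Re m" using rdef[of 1] mtrace_pauli(2)[OF E0c] E01 E10 by simp
  have r2: "r 2 = - 2 * Im m" using rdef[of 2] mtrace_pauli(3)[OF E0c] E01 E10 by simp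
  define Om where "Om i j = OB $$ (i,j)" for i j
  have h: "\<And>c. c < 3 \<Longrightarrow> (UB * pauli c * mat_adjoint UB) $$ (0,1) = of_real (Om 1 c) - \<i> * of_real (Om 2 c)"
    unfolding Om_def OBdef[symmetric] by (rule h_O[OF U])
  have OBc: "OB \<in> carrier_mat 3 3" using rot unfolding rotation3_def by auto
  have OO: "OB * transpose_mat OB = 1\<^sub>m 3" using rot unfolding rotation3_def by auto
  have orth: "\<And>i. i < 3 \<Longrightarrow> Om i 0 * Om 0 0 + Om i 1 * Om 0 1 + Om i 2 * Om 0 2 = (if i = 0 then 1 else 0)"
  proof -
    fix i :: nat assume i: "i < 3"
    have "(OB * transpose_mat OB) $$ (i,0) = (\<Sum>c<3. OB $$ (i,c) * OB $$ (0,c))"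
      using OBc i by (simp add: scalar_prod_def atLeast0LessThan)
    thus "Om i 0 * Om 0 0 + Om i 1 * Om 0 1 + Om i 2 * Om 0 2 = (if i = 0 then 1 else 0)"
      unfolding OO Om_def sum_3 using i by simp
  qed
  obtain cc where cc: "\<And>j. j < 3 \<Longrightarrow> Om 0 j = cc * r j" using al unfolding Om_def r_def by auto
  have "cc * cc * (r 0 * r 0 + r 1 * r 1 + r 2 * r 2) = 1"
    using orth[of 0] cc[of 0] cc[of 1] cc[of 2] by (simp add: algebra_simps)
  hence cc0: "cc \<noteq> 0" by auto
  have o1: "Om 1 0 * r 0 + Om 1 1 * r 1 + Om 1 2 * r 2 = 0"
  proof -
    have "cc * (Om 1 0 * r 0 + Om 1 1 * r 1 + Om 1 2 * r 2) = 0"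
      using orth[of 1] cc[of 0] cc[of 1] cc[of 2] by (simp add: algebra_simps)
    thus ?thesis using cc0 by simp
  qed
  have o2: "Om 2 0 * r 0 + Om 2 1 * r 1 + Om 2 2 * r 2 = 0"
  proof -
    have "cc * (Om 2 0 * r 0 + Om 2 1 * r 1 + Om 2 2 * r 2) = 0"
      using orth[of 2] cc[of 0] cc[of 1] cc[of 2] by (simp add: algebra_simps)
    thus ?thesis using cc0 by simp
  qed
  define u where "u i j = UB $$ (i,j)" for i j
  have uu: "u 0 0 * cnj (u 1 0) + u 0 1 * cnj (u 1 1) = 0"
  proof -
    have "(UB * mat_adjoint UB) $$ (0,1) = 0" using unitary2_right[OF UB] by simp
    thus ?thesis unfolding u_def by (simp add: mult22[OF U adj_carrier[OF U]] adj22[OF U])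
  qed
  have hp: "\<And>c. c < 3 \<Longrightarrow> (UB * pauli c * mat_adjoint UB) $$ (0,1) =
    (u 0 0 * pauli c $$ (0,0) + u 0 1 * pauli c $$ (1,0)) * cnj (u 1 0) +
    (u 0 0 * pauli c $$ (0,1) + u 0 1 * pauli c $$ (1,1)) * cnj (u 1 1)"
    unfolding u_def by (rule sandwich22[OF U pauli_carrier], simp_all)
  have h0: "(UB * pauli 0 * mat_adjoint UB) $$ (0,1) = u 0 0 * cnj (u 1 0) - u 0 1 * cnj (u 1 1)"
    using hp[of 0] by (simp add: pauli0 pauli0[simplified])
  have h1: "(UB * pauli 1 * mat_adjoint UB) $$ (0,1) = u 0 1 * cnj (u 1 0) + u 0 0 * cnj (u 1 1)"
    using hp[of 1] by (simp add: pauli1 pauli1[simplified])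
  have h2: "(UB * pauli 2 * mat_adjoint UB) $$ (0,1) = \<i> * u 0 1 * cnj (u 1 0) - \<i> * u 0 0 * cnj (u 1 1)"
    using hp[of 2] by (simp add: pauli2 pauli2[simplified])
  have lhs: "(UB * M * mat_adjoint UB) $$ (0,1) =
    (u 0 0 * M $$ (0,0) + u 0 1 * M $$ (1,0)) * cnj (u 1 0) +
    (u 0 0 * M $$ (0,1) + u 0 1 * M $$ (1,1)) * cnj (u 1 1)"
    unfolding u_def by (rule sandwich22[OF U Mc], simp_all)
  have mre: "m = of_real (r 1 / 2) - \<i> * of_real (r 2 / 2)"
    unfolding r1 r2 by (simp add: complex_eq_iff)
  have key: "(UB * M * mat_adjoint UB) $$ (0,1) =
     (u 0 0 * cnj (u 1 0) + u 0 1 * cnj (u 1 1)) / 2 +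
     (of_real (r 0) * (u 0 0 * cnj (u 1 0) - u 0 1 * cnj (u 1 1)) +
      of_real (r 1) * (u 0 1 * cnj (u 1 0) + u 0 0 * cnj (u 1 1)) +
      of_real (r 2) * (\<i> * u 0 1 * cnj (u 1 0) - \<i> * u 0 0 * cnj (u 1 1))) / 2"
  proof -
    have a': "of_real a = (1 + of_real (r 0)) / (2 :: complex)" unfolding r0 by (simp add: field_simps)
    have cm: "cnj m = of_real (r 1 / 2) + \<i> * of_real (r 2 / 2)" unfolding mre by simp
    show ?thesis unfolding lhs M00 M11 M10 m_def[symmetric] a' cm unfolding mre
      by (simp add: field_simps)
  qed
  have "(UB * M * mat_adjoint UB) $$ (0,1) =
     (of_real (r 0) * (of_real (Om 1 0) - \<i> * of_real (Om 2 0)) +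
      of_real (r 1) * (of_real (Om 1 1) - \<i> * of_real (Om 2 1)) +
      of_real (r 2) * (of_real (Om 1 2) - \<i> * of_real (Om 2 2))) / 2"
    unfolding key uu using h[of 0] h[of 1] h[of 2] h0 h1 h2 by simp
  also have "\<dots> = (of_real (Om 1 0 * r 0 + Om 1 1 * r 1 + Om 1 2 * r 2) - \<i> * of_real (Om 2 0 * r 0 + Om 2 1 * r 1 + Om 2 2 * r 2)) / 2"
    by (simp add: algebra_simps)
  also have "\<dots> = 0" unfolding o1 o2 by simp
  finally show ?thesis unfolding M_def .
qed

lemma adj_one: "mat_adjoint (1\<^sub>m 2 :: complex mat) = 1\<^sub>m 2"
  by (rule eq_matI, auto simp: adj_index)

lemma rate_bound:
  assumes qc: "qubit_channel Ks" and EI: "apply_channel Ks (1\<^sub>m 2) = 1\<^sub>m 2"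
    and UA: "unitary2 UA" and UB: "unitary2 UB"
  shows "key_rate (compose_unitaries UB Ks UA) \<le> 1 - vn_entropy (rho_E Ks)"
proof -
  let ?K = "compose_unitaries UB Ks UA"
  have qc': "qubit_channel ?K" by (rule compose_qc[OF qc UA UB])
  have EI': "apply_channel ?K (1\<^sub>m 2) = 1\<^sub>m 2" by (rule compose_EI[OF qc UA UB EI])
  note RF = rate_formula[OF qc' EI']
  have "2 * (eta ((1 + sqrt (1 - 4 * (Re (apply_channel ?K (ket_proj 0) $$ (0, 0)) * Re (apply_channel ?K (ket_proj 0) $$ (1, 1)) - (cmod (apply_channel ?K (ket_proj 0) $$ (0, 1)))\<^sup>2))) / 4) +
        eta ((1 - sqrt (1 - 4 * (Re (apply_channel ?K (ket_proj 0) $$ (0, 0)) * Re (apply_channel ?K (ket_proj 0) $$ (1, 1)) - (cmod (apply_channel ?K (ket_proj 0) $$ (0, 1)))\<^sup>2))) / 4))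
        - hb (Re (apply_channel ?K (ket_proj 0) $$ (0, 0))) \<le> 1"
    by (rule entropy_ineq(1)[OF RF(2-5)])
  thus ?thesis unfolding RF(1) rho_E_compose[OF qc UA UB] by simp
qed

lemma rate_star:
  assumes qc: "qubit_channel Ks" and EI: "apply_channel Ks (1\<^sub>m 2) = 1\<^sub>m 2"
    and rot: "rotation3 OB"
    and al: "\<exists>c. \<forall>j<3. OB $$ (0, j) = c * stokes_R Ks $$ (j, 0)"
    and UB: "unitary2 UB" and OBdef: "stokes_R [UB] = OB"
  shows "key_rate (post_unitary UB Ks) = 1 - vn_entropy (rho_E Ks)"
proof -
  have cK: "\<forall>K\<in>set Ks. K \<in> carrier_mat 2 2" by (rule qc_carrier_all[OF qc])
  have U: "UB \<in> carrier_mat 2 2" by (rule unitary2_carrier[OF UB])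
  let ?K = "compose_unitaries UB Ks (1\<^sub>m 2)"
  have pc: "post_unitary UB Ks = ?K" by (rule post_compose[OF qc])
  have qc': "qubit_channel ?K" by (rule compose_qc[OF qc unitary2_one UB])
  have EI': "apply_channel ?K (1\<^sub>m 2) = 1\<^sub>m 2" by (rule compose_EI[OF qc unitary2_one UB EI])
  define Ms where "Ms = apply_channel ?K (ket_proj 0)"
  have "Ms = UB * apply_channel Ks (1\<^sub>m 2 * ket_proj 0 * mat_adjoint (1\<^sub>m 2)) * mat_adjoint UB"
    unfolding Ms_def compose_unitaries_def by (rule apply_compose[OF cK U one_carrier_mat ket_proj_carrier])
  also have "1\<^sub>m 2 * ket_proj 0 * mat_adjoint (1\<^sub>m 2) = ket_proj 0" unfolding adj_one
    using left_mult_one_mat[OF ket_proj_carrier[of 0]] right_mult_one_mat[OF ket_proj_carrier[of 0]] by simp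
  finally have Ms: "Ms = UB * apply_channel Ks (ket_proj 0) * mat_adjoint UB" .
  have off: "Ms $$ (0,1) = 0" unfolding Ms by (rule offdiag_zero[OF qc EI rot al UB OBdef])
  note MP = M_props[OF qc' EI', folded Ms_def]
  have R11: "Re (Ms $$ (1,1)) = 1 - Re (Ms $$ (0,0))" using MP(2) by simp
  define a where "a = Re (Ms $$ (0,0))"
  note RF = rate_formula[OF qc' EI', folded Ms_def]
  have d: "Re (Ms $$ (0,0)) * Re (Ms $$ (1,1)) - (cmod (Ms $$ (0,1)))\<^sup>2 = a * (1 - a)"
    unfolding off R11 a_def by simp
  have eq: "2 * (eta ((1 + sqrt (1 - 4 * (a * (1 - a)))) / 4) + eta ((1 - sqrt (1 - 4 * (a * (1 - a)))) / 4)) - hb a = 1"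
    using entropy_ineq(2)[OF RF(2,3)[folded a_def] RF(4,5)[unfolded d, folded a_def]] by simp
  have kr: "key_rate ?K = 2 * (eta ((1 + sqrt (1 - 4 * (a * (1 - a)))) / 4) + eta ((1 - sqrt (1 - 4 * (a * (1 - a)))) / 4)) - vn_entropy (rho_E ?K) - hb a"
    by (simp only: RF(1) d a_def)
  show ?thesis using kr eq unfolding pc rho_E_compose[OF qc unitary2_one UB] by linarith
qed

theorem corollary1:
  fixes Ks :: "complex mat list" and OB :: "real mat" and UB :: "complex mat"
  assumes "qubit_channel Ks" and "unital Ks"
    and "rotation3 OB"
    and "\<exists>c. \<forall>j<3. OB $$ (0, j) = c * stokes_R Ks $$ (j, 0)"
    and "unitary2 UB" and "stokes_R [UB] = OB"
  shows "F1 Ks = key_rate (post_unitary UB Ks) \<and> key_rate (post_unitary UB Ks) = F2 Ks"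
proof -
  note qc = assms(1)
  have EI: "apply_channel Ks (1\<^sub>m 2) = 1\<^sub>m 2" by (rule unital_EI[OF assms(1,2)])
  have star: "key_rate (post_unitary UB Ks) = 1 - vn_entropy (rho_E Ks)"
    by (rule rate_star[OF qc EI assms(3,4,5,6)])
  have F1: "F1 Ks = key_rate (post_unitary UB Ks)"
    unfolding F1_def
  proof (rule cSup_eq_maximum)
    show "key_rate (post_unitary UB Ks) \<in> (\<lambda>U. key_rate (post_unitary U Ks)) ` {U. unitary2 U}"
      using assms(5) by auto
    fix x assume "x \<in> (\<lambda>U. key_rate (post_unitary U Ks)) ` {U. unitary2 U}"
    then obtain U where U: "unitary2 U" and x: "x = key_rate (post_unitary U Ks)" by auto
    show "x \<le> key_rate (post_unitary UB Ks)"
      unfolding star x using rate_bound[OF qc EI unitary2_one U] post_compose[OF qc, of U] by simp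
  qed
  have F2: "F2 Ks = key_rate (post_unitary UB Ks)"
    unfolding F2_def
  proof (rule cSup_eq_maximum)
    show "key_rate (post_unitary UB Ks) \<in> (\<lambda>p. key_rate (compose_unitaries (snd p) Ks (fst p))) ` {(UA, UB). unitary2 UA \<and> unitary2 UB}"
      using assms(5) unitary2_one post_compose[OF qc, of UB]
      by (intro image_eqI[of _ _ "(1\<^sub>m 2, UB)"], auto)
    fix x assume "x \<in> (\<lambda>p. key_rate (compose_unitaries (snd p) Ks (fst p))) ` {(UA, UB). unitary2 UA \<and> unitary2 UB}"
    then obtain UA U where U: "unitary2 UA" "unitary2 U" and x: "x = key_rate (compose_unitaries U Ks UA)" by auto
    show "x \<le> key_rate (post_unitary UB Ks)"
      unfolding star x by (rule rate_bound[OF qc EI U])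
  qed
  show ?thesis using F1 F2 by simp
qed

end
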